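(* For each $N$ let $\mathbf X^N=(\mathbf X^N(t))_{t\ge0}$ be a continuous-time Markov jump process on $\mathcal X^N$ with generator $\mathcal L^Nf(\bm x)=\sum_{i=1}^N\sum_{y\in\mathcal X}(f(\bm x^{i;y})-f(\bm x))\bm Q^N_{\bm x,\bm x^{i;y}}$. Then the laws of the empirical measures are tight in the Skorokhod topology; in particular, for every $x\in\mathcal X$ and $\varepsilon>0$, $$\lim_{\delta\to0}\limsup_{N\to\infty}\mathbb P\Big[\sup_{|t-s|\le\delta}\big|L^N_x(\mathbf X^N(t))-L^N_x(\mathbf X^N(s))\big|>\varepsilon\Big]=0.$$
   Context: $\mathcal X=\{1,\dots,d\}$ finite; $L^N(\bm x)=\frac1N\sum_i\delta_{x_i}$, $L^N_x(\bm x)$ its mass at $x$; $\mathcal P_N(\mathcal X)=L^N(\mathcal X^N)$; $\bm x^{i;y}$ is $\bm x$ with $x_i$ replaced by $y$. $K:\mathcal P(\mathcal X)\times\mathcal X\to\mathbb R$ with $K_x$ twice continuously differentiable; $U=\sum_x\mu_xK_x$, $H_x=\partial_{\mu_x}U$, $\pi_x\propto e^{-H_x}$. $\{A(\mu)\}$ irreducible symmetric nonnegative matrices, Lipschitz in $\mu$, and $A^N(\mu)$ irreducible symmetric nonnegative matrices with $A^N_{xy}\to A_{xy}$ uniformly on $\mathcal P(\mathcal X)$. For $\mu\in\mathcal P_N(\mathcal X)$, $\mu_x>0$, $y\ne x$: $Q^N_{xy}(\mu)=\exp(-\frac N2(U(\mu+\frac{\delta_y-\delta_x}N)-U(\mu)))A^N_{xy}(\mu)$,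 and $\bm Q^N_{\bm x,\bm x^{i;y}}=Q^N_{x_i,y}(L^N\bm x)$ for $y\ne x_i$ (terms with $y=x_i$ contribute nothing to $\mathcal L^N$). The initial distributions of $\mathbf X^N$ are arbitrary. *)

theory Defs
  imports "HOL-Probability.Probability"
begin

definition prob_vecs :: "(real ^ 'x::finite) set" where
  "prob_vecs = {\<mu>. (\<forall>x. 0 \<le> \<mu> $ x) \<and> (\<Sum>x\<in>UNIV. \<mu> $ x) = 1}"

definition configs :: "nat \<Rightarrow> ('x list) set" where
  "configs N = {xs. length xs = N}"

definition emp :: "nat \<Rightarrow> 'x::finite list \<Rightarrow> real ^ 'x" where
  "emp N xs = (\<chi> x. real (card {i. i < N \<and> xs ! i = x}) / real N)"

definition C2_on :: "(real ^ 'x::finite) set \<Rightarrow> (real ^ 'x \<Rightarrow> real) \<Rightarrow> bool" where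
  "C2_on S f \<longleftrightarrow> (\<exists>f' f''.
      (\<forall>\<mu>\<in>S. (f has_derivative blinfun_apply (f' \<mu>)) (at \<mu>)) \<and>
      (\<forall>\<mu>\<in>S. (f' has_derivative blinfun_apply (f'' \<mu>)) (at \<mu>)) \<and>
      continuous_on S f'')"

definition energy :: "('x::finite \<Rightarrow> real ^ 'x \<Rightarrow> real) \<Rightarrow> real ^ 'x \<Rightarrow> real" where
  "energy K \<mu> = (\<Sum>x\<in>UNIV. \<mu> $ x * K x \<mu>)"

definition nonneg_matrix :: "('x \<Rightarrow> 'x \<Rightarrow> real) \<Rightarrow> bool" where
  "nonneg_matrix A \<longleftrightarrow> (\<forall>x y. 0 \<le> A x y)"

definition symmetric_matrix :: "('x \<Rightarrow> 'x \<Rightarrow> real) \<Rightarrow> bool" where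
  "symmetric_matrix A \<longleftrightarrow> (\<forall>x y. A x y = A y x)"

definition irreducible_matrix :: "('x \<Rightarrow> 'x \<Rightarrow> real) \<Rightarrow> bool" where
  "irreducible_matrix A \<longleftrightarrow> (\<forall>x y. (x, y) \<in> {(a, b). 0 < A a b}\<^sup>*)"

definition rateQ :: "('x::finite \<Rightarrow> real ^ 'x \<Rightarrow> real) \<Rightarrow> (nat \<Rightarrow> real ^ 'x \<Rightarrow> 'x \<Rightarrow> 'x \<Rightarrow> real)
     \<Rightarrow> nat \<Rightarrow> real ^ 'x \<Rightarrow> 'x \<Rightarrow> 'x \<Rightarrow> real" where
  "rateQ K AN N \<mu> x y =
     exp (- (real N / 2) * (energy K (\<mu> + (axis y 1 - axis x 1) /\<^sub>R real N) - energy K \<mu>)) * AN N \<mu> x y"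

definition genL :: "('x::finite \<Rightarrow> real ^ 'x \<Rightarrow> real) \<Rightarrow> (nat \<Rightarrow> real ^ 'x \<Rightarrow> 'x \<Rightarrow> 'x \<Rightarrow> real)
     \<Rightarrow> nat \<Rightarrow> ('x list \<Rightarrow> real) \<Rightarrow> 'x list \<Rightarrow> real" where
  "genL K AN N f xs =
     (\<Sum>i<N. \<Sum>y\<in>UNIV. if y = xs ! i then 0
        else (f (xs[i := y]) - f xs) * rateQ K AN N (emp N xs) (xs ! i) y)"

definition gen_matrix :: "(('s \<Rightarrow> real) \<Rightarrow> 's \<Rightarrow> real) \<Rightarrow> 's \<Rightarrow> 's \<Rightarrow> real" where
  "gen_matrix L a b = L (\<lambda>z. if z = b then 1 else 0) a"

fun mpow :: "'s set \<Rightarrow> ('s \<Rightarrow> 's \<Rightarrow> real) \<Rightarrow> nat \<Rightarrow> 's \<Rightarrow> 's \<Rightarrow> real" where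
  "mpow S G 0 a b = (if a = b then 1 else 0)"
| "mpow S G (Suc n) a b = (\<Sum>c\<in>S. G a c * mpow S G n c b)"

definition trans_fun :: "'s set \<Rightarrow> ('s \<Rightarrow> 's \<Rightarrow> real) \<Rightarrow> real \<Rightarrow> 's \<Rightarrow> 's \<Rightarrow> real" where
  "trans_fun S G t a b = (\<Sum>n. t ^ n / fact n * mpow S G n a b)"

definition cadlag_step :: "(real \<Rightarrow> 's) \<Rightarrow> bool" where
  "cadlag_step p \<longleftrightarrow> (\<forall>t\<ge>0. (\<exists>e>0. \<forall>s\<in>{t..<t+e}. p s = p t) \<and>
                              (0 < t \<longrightarrow> (\<exists>e>0. \<exists>v. \<forall>s\<in>{t-e<..<t}. p s = v)))"

definition markov_jump_process ::
  "'a measure \<Rightarrow> 's set \<Rightarrow> ('s \<Rightarrow> 's \<Rightarrow> real) \<Rightarrow> (real \<Rightarrow> 'a \<Rightarrow> 's) \<Rightarrow> bool" where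
  "markov_jump_process M S G X \<longleftrightarrow>
     prob_space M \<and>
     (\<forall>t\<ge>0. \<forall>\<omega>\<in>space M. X t \<omega> \<in> S) \<and>
     (\<forall>t\<ge>0. X t \<in> measurable M (count_space UNIV)) \<and>
     (AE \<omega> in M. cadlag_step (\<lambda>t. X t \<omega>)) \<and>
     (\<forall>(n::nat) (ts::nat \<Rightarrow> real) (ss::nat \<Rightarrow> 's).
        0 \<le> ts 0 \<longrightarrow> (\<forall>k<n. ts k \<le> ts (Suc k)) \<longrightarrow>
        measure M {\<omega>\<in>space M. \<forall>k\<le>n. X (ts k) \<omega> = ss k} =
        measure M {\<omega>\<in>space M. X (ts 0) \<omega> = ss 0} *
        (\<Prod>k<n. trans_fun S G (ts (Suc k) - ts k) (ss k) (ss (Suc k))))"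

(* outer probability (coincides with the probability on measurable events) *)
definition outer_prob :: "'a measure \<Rightarrow> 'a set \<Rightarrow> real" where
  "outer_prob M A = Inf {measure M B | B. B \<in> sets M \<and> A \<inter> space M \<subseteq> B}"

end

theory Submission
  imports Defs
begin

locale unif =
  fixes S :: "'s set" and G :: "'s \<Rightarrow> 's \<Rightarrow> real" and L :: real
  assumes finS: "finite S" and Lpos: "0 < L"
    and offd: "\<And>a b. a \<in> S \<Longrightarrow> b \<in> S \<Longrightarrow> a \<noteq> b \<Longrightarrow> 0 \<le> G a b"
    and rows: "\<And>a. a \<in> S \<Longrightarrow> (\<Sum>b\<in>S. G a b) = 0"
    and diag: "\<And>a. a \<in> S \<Longrightarrow> - G a a \<le> L"
begin

definition Pm :: "'s \<Rightarrow> 's \<Rightarrow> real" where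
  "Pm a b = (if a = b then 1 else 0) + G a b / L"

lemma Pm_nonneg: "a \<in> S \<Longrightarrow> b \<in> S \<Longrightarrow> 0 \<le> Pm a b"
proof (cases "a = b")
  case True
  assume "a \<in> S"
  then have "- G a a \<le> L" by (rule diag)
  then have "-1 \<le> G a a / L" using Lpos by (simp add: field_simps)
  then show ?thesis using True by (simp add: Pm_def)
next
  case False
  assume "a \<in> S" "b \<in> S"
  then show ?thesis using False offd[of a b] Lpos by (simp add: Pm_def)
qed

lemma Pm_row: "a \<in> S \<Longrightarrow> (\<Sum>b\<in>S. Pm a b) = 1"
  unfolding Pm_def using finS
  by (simp add: sum.distrib sum_divide_distrib[symmetric] rows)

lemma mpow_nonneg: "a \<in> S \<Longrightarrow> b \<in> S \<Longrightarrow> 0 \<le> mpow S Pm k a b"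
proof (induction k arbitrary: a)
  case 0 then show ?case by simp
next
  case (Suc k) then show ?case
    by (auto intro!: sum_nonneg mult_nonneg_nonneg Pm_nonneg)
qed

lemma mpow_row: "a \<in> S \<Longrightarrow> (\<Sum>b\<in>S. mpow S Pm k a b) = 1"
proof (induction k arbitrary: a)
  case 0 then show ?case using finS by simp
next
  case (Suc k)
  have "(\<Sum>b\<in>S. mpow S Pm (Suc k) a b) = (\<Sum>c\<in>S. Pm a c * (\<Sum>b\<in>S. mpow S Pm k c b))"
    by (simp add: sum_distrib_left) (rule sum.swap)
  also have "\<dots> = (\<Sum>c\<in>S. Pm a c)" using Suc.IH by simp
  finally show ?case using Pm_row Suc.prems by simp
qed

lemma mpow_le1: "a \<in> S \<Longrightarrow> b \<in> S \<Longrightarrow> mpow S Pm k a b \<le> 1"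
proof -
  assume a: "a \<in> S" and b: "b \<in> S"
  have "mpow S Pm k a b \<le> (\<Sum>b\<in>S. mpow S Pm k a b)"
    using finS b by (intro member_le_sum) (auto intro: mpow_nonneg a)
  then show ?thesis using mpow_row[OF a] by simp
qed

end

lemma mpow_scale: "mpow S (\<lambda>a b. c * B a b) k a b = c ^ k * mpow S B k a b"
  by (induction k arbitrary: a) (auto simp: sum_distrib_left mult_ac)

lemma binom_step:
  fixes f :: "nat \<Rightarrow> real"
  shows "(\<Sum>k\<le>n. real (n choose k) * q ^ (n - k) * f (Suc k)) +
         q * (\<Sum>k\<le>n. real (n choose k) * q ^ (n - k) * f k)
       = (\<Sum>k\<le>Suc n. real (Suc n choose k) * q ^ (Suc n - k) * f k)"
proof -
  have r: "(\<Sum>k\<le>Suc n. real (Suc n choose k) * q ^ (Suc n - k) * f k)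
     = q ^ Suc n * f 0 + (\<Sum>j\<le>n. real (n choose j) * q ^ (n - j) * f (Suc j))
       + (\<Sum>j\<le>n. real (n choose Suc j) * q ^ (n - j) * f (Suc j))"
    by (subst sum.atMost_Suc_shift) (simp add: sum.distrib algebra_simps)
  have l: "q * (\<Sum>k\<le>n. real (n choose k) * q ^ (n - k) * f k)
     = q ^ Suc n * f 0 + (\<Sum>j\<le>n. real (n choose Suc j) * q ^ (n - j) * f (Suc j))"
  proof -
    have "q * (\<Sum>k\<le>n. real (n choose k) * q ^ (n - k) * f k)
       = (\<Sum>k<Suc n. real (n choose k) * q ^ (Suc n - k) * f k)"
      by (simp add: sum_distrib_left lessThan_Suc_atMost Suc_diff_le algebra_simps)
    also have "\<dots> = q ^ Suc n * f 0 + (\<Sum>j<n. real (n choose Suc j) * q ^ (n - j) * f (Suc j))"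
      by (subst sum.lessThan_Suc_shift) simp
    also have "(\<Sum>j<n. real (n choose Suc j) * q ^ (n - j) * f (Suc j))
        = (\<Sum>j\<le>n. real (n choose Suc j) * q ^ (n - j) * f (Suc j))"
      by (simp add: lessThan_Suc_atMost[symmetric])
    finally show ?thesis .
  qed
  show ?thesis using r l by simp
qed

lemma mpow_binom:
  assumes G: "\<And>a c. a \<in> S \<Longrightarrow> c \<in> S \<Longrightarrow> G a c = B a c + q * (if a = c then 1 else 0)"
    and fin: "finite S"
  shows "a \<in> S \<Longrightarrow> mpow S G n a b = (\<Sum>k\<le>n. real (n choose k) * q ^ (n - k) * mpow S B k a b)"
proof (induction n arbitrary: a)
  case 0 then show ?case by simp
next
  case (Suc n)
  let ?g = "\<lambda>c. (\<Sum>k\<le>n. real (n choose k) * q ^ (n - k) * mpow S B k c b)"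
  have "mpow S G (Suc n) a b = (\<Sum>c\<in>S. (B a c + q * (if a = c then 1 else 0)) * ?g c)"
    using Suc by (auto intro!: sum.cong simp: G)
  also have "\<dots> = (\<Sum>c\<in>S. B a c * ?g c) + q * ?g a"
  proof -
    have "(\<Sum>c\<in>S. (B a c + q * (if a = c then 1 else 0)) * ?g c)
        = (\<Sum>c\<in>S. B a c * ?g c + (if a = c then q * ?g c else 0))"
      by (intro sum.cong) (auto simp: algebra_simps)
    also have "\<dots> = (\<Sum>c\<in>S. B a c * ?g c) + q * ?g a"
      using fin Suc.prems by (simp add: sum.distrib)
    finally show ?thesis .
  qed
  also have "(\<Sum>c\<in>S. B a c * ?g c) = (\<Sum>k\<le>n. real (n choose k) * q ^ (n - k) * mpow S B (Suc k) a b)"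
    by (simp add: sum_distrib_left mult_ac) (rule sum.swap)
  finally show ?case using binom_step[of n q "\<lambda>k. mpow S B k a b"] by simp
qed

lemma term_eq:
  fixes t L P :: real
  assumes "k \<le> n"
  shows "t ^ n / fact n * (real (n choose k) * (- L) ^ (n - k) * (L ^ k * P))
       = ((L * t) ^ k / fact k * P) * ((- L) ^ (n - k) * t ^ (n - k) / fact (n - k))"
proof -
  have c: "real (n choose k) = fact n / (fact k * fact (n - k))"
    using binomial_fact[OF assms] by simp
  have tn: "t ^ n = t ^ k * t ^ (n - k)"
    using assms by (simp add: power_add[symmetric])
  show ?thesis unfolding c tn
    by (simp add: field_simps power_mult_distrib)
qed

lemma exp_sums_real: "(\<lambda>n. (x::real) ^ n / fact n) sums exp x"
  using exp_converges[of x] by (simp add: divide_inverse mult.commute)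

lemma summable_abs_exp: "summable (\<lambda>k. \<bar>x::real\<bar> ^ k / fact k)"
  using summable_exp_generic[of "\<bar>x\<bar>"] by (simp add: field_simps)

context unif begin

definition Ps :: "real \<Rightarrow> 's \<Rightarrow> 's \<Rightarrow> real" where
  "Ps t a b = exp (- L * t) * (\<Sum>k. (L * t) ^ k / fact k * mpow S Pm k a b)"

lemma summ_term: "a \<in> S \<Longrightarrow> b \<in> S \<Longrightarrow> summable (\<lambda>k. norm ((L * t) ^ k / fact k * mpow S Pm k a b))"
proof -
  assume a: "a \<in> S" and b: "b \<in> S"
  show ?thesis
  proof (rule summable_comparison_test[OF _ summable_abs_exp[of "L*t"]])
    show "\<exists>N. \<forall>n\<ge>N. norm (norm ((L * t) ^ n / fact n * mpow S Pm n a b)) \<le> \<bar>L * t\<bar> ^ n / fact n"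
    proof (intro exI allI impI)
      fix n :: nat
      have "\<bar>mpow S Pm n a b\<bar> \<le> 1" using mpow_le1[OF a b] mpow_nonneg[OF a b] by simp
      then have "\<bar>(L * t) ^ n\<bar> / fact n * \<bar>mpow S Pm n a b\<bar> \<le> \<bar>(L * t) ^ n\<bar> / fact n * 1"
        by (intro mult_left_mono) auto
      then show "norm (norm ((L * t) ^ n / fact n * mpow S Pm n a b)) \<le> \<bar>L * t\<bar> ^ n / fact n"
        by (simp add: abs_mult power_abs)
    qed
  qed
qed

lemma summ_term': "a \<in> S \<Longrightarrow> b \<in> S \<Longrightarrow> summable (\<lambda>k. (L * t) ^ k / fact k * mpow S Pm k a b)"
  by (rule summable_norm_cancel, rule summ_term)

lemma trans_eq:
  assumes a: "a \<in> S" and b: "b \<in> S"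
  shows "trans_fun S G t a b = Ps t a b"
proof -
  have Gd: "G a' c = L * Pm a' c + (- L) * (if a' = c then 1 else 0)" for a' c
    unfolding Pm_def using Lpos by (simp add: field_simps)
  have mp: "mpow S G n a b = (\<Sum>k\<le>n. real (n choose k) * (- L) ^ (n - k) * (L ^ k * mpow S Pm k a b))" for n
  proof -
    have "mpow S G n a b = (\<Sum>k\<le>n. real (n choose k) * (-L)^(n-k) * mpow S (\<lambda>a c. L * Pm a c) k a b)"
      by (rule mpow_binom[OF _ finS a]) (rule Gd)
    then show ?thesis by (simp only: mpow_scale)
  qed
  define A where "A k = (L * t) ^ k / fact k * mpow S Pm k a b" for k
  define E where "E j = (- L) ^ j * t ^ j / fact j" for j
  have sA: "summable (\<lambda>k. norm (A k))" unfolding A_def using summ_term[OF a b] .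
  have Ee: "E = (\<lambda>j. (- L * t) ^ j / fact j)"
    unfolding E_def by (rule ext) (simp only: power_mult_distrib)
  have sE: "summable (\<lambda>k. norm (E k))" unfolding Ee real_norm_def
    using summable_abs_exp[of "- L * t"] by (simp add: abs_divide power_abs)
  have eE: "(\<Sum>k. E k) = exp (- L * t)"
    unfolding Ee using exp_sums_real[of "- L * t"] by (rule sums_unique[symmetric])
  have tn: "t ^ n / fact n * mpow S G n a b = (\<Sum>k\<le>n. A k * E (n - k))" for n
    unfolding mp sum_distrib_left A_def E_def by (intro sum.cong refl) (rule term_eq, simp)
  have "trans_fun S G t a b = (\<Sum>n. \<Sum>k\<le>n. A k * E (n - k))"
    unfolding trans_fun_def tn ..
  also have "\<dots> = (\<Sum>k. A k) * (\<Sum>k. E k)"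
    using Cauchy_product[OF sA sE] by simp
  finally show ?thesis unfolding Ps_def eE A_def by simp
qed

lemma Ps_nonneg: "a \<in> S \<Longrightarrow> b \<in> S \<Longrightarrow> 0 \<le> t \<Longrightarrow> 0 \<le> Ps t a b"
proof -
  assume a: "a \<in> S" and b: "b \<in> S" and t: "0 \<le> t"
  have "0 \<le> (\<Sum>k. (L * t) ^ k / fact k * mpow S Pm k a b)"
  proof (rule suminf_nonneg[OF summ_term'[OF a b]])
    fix n
    show "0 \<le> (L * t) ^ n / fact n * mpow S Pm n a b"
      using Lpos t mpow_nonneg[OF a b] by simp
  qed
  then show ?thesis unfolding Ps_def by simp
qed

lemma Ps_row: "a \<in> S \<Longrightarrow> (\<Sum>b\<in>S. Ps t a b) = 1"
proof -
  assume a: "a \<in> S"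
  have "(\<Sum>b\<in>S. Ps t a b) = exp (- L * t) * (\<Sum>b\<in>S. \<Sum>k. (L * t) ^ k / fact k * mpow S Pm k a b)"
    unfolding Ps_def by (simp add: sum_distrib_left)
  also have "(\<Sum>b\<in>S. \<Sum>k. (L * t) ^ k / fact k * mpow S Pm k a b)
      = (\<Sum>k. \<Sum>b\<in>S. (L * t) ^ k / fact k * mpow S Pm k a b)"
    by (rule suminf_sum[symmetric]) (use summ_term' a in auto)
  also have "\<dots> = (\<Sum>k. (L * t) ^ k / fact k)"
  proof (rule suminf_cong)
    fix k
    show "(\<Sum>b\<in>S. (L * t) ^ k / fact k * mpow S Pm k a b) = (L * t) ^ k / fact k"
      by (subst sum_distrib_left[symmetric]) (simp add: mpow_row a)
  qed
  also have "\<dots> = exp (L * t)"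
    using exp_sums_real[of "L * t"] by (rule sums_unique[symmetric])
  finally show ?thesis by (simp add: exp_minus_inverse mult_exp_exp)
qed

end

lemma series_k: "(\<lambda>k. (x::real) ^ k / fact k * real k) sums (x * exp x)"
proof -
  have "(\<lambda>n. x * (x ^ n / fact n)) sums (x * exp x)"
    by (rule sums_mult[OF exp_sums_real])
  moreover have "(\<lambda>n. x ^ Suc n / fact (Suc n) * real (Suc n)) = (\<lambda>n. x * (x ^ n / fact n))"
  proof (rule ext)
    fix n
    have f: "(fact (Suc n)::real) = real (Suc n) * fact n" by (rule fact_Suc)
    have "real (Suc n) \<noteq> 0" by simp
    then show "x ^ Suc n / fact (Suc n) * real (Suc n) = x * (x ^ n / fact n)"
      unfolding f power_Suc by (simp add: field_simps del: of_nat_Suc)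
  qed
  ultimately have "(\<lambda>n. x ^ Suc n / fact (Suc n) * real (Suc n)) sums (x * exp x)" by simp
  then show ?thesis using sums_Suc_iff[of "\<lambda>k. x ^ k / fact k * real k"] by simp
qed

lemma series_k2: "(\<lambda>k. (x::real) ^ k / fact k * (real k)^2) sums ((x^2 + x) * exp x)"
proof -
  have "(\<lambda>n. x * (x ^ n / fact n * real n) + x * (x ^ n / fact n)) sums (x * (x * exp x) + x * exp x)"
    by (intro sums_add sums_mult series_k exp_sums_real)
  moreover have "(\<lambda>n. x ^ Suc n / fact (Suc n) * (real (Suc n))^2) = (\<lambda>n. x * (x ^ n / fact n * real n) + x * (x ^ n / fact n))"
  proof (rule ext)
    fix n
    have f: "(fact (Suc n)::real) = real (Suc n) * fact n" by (rule fact_Suc)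
    have "real (Suc n) \<noteq> 0" by simp
    then have "x ^ Suc n / fact (Suc n) * (real (Suc n))^2 = x * (x ^ n / fact n) * real (Suc n)"
      unfolding f power_Suc by (simp add: field_simps power2_eq_square del: of_nat_Suc)
    then show "x ^ Suc n / fact (Suc n) * (real (Suc n))^2 = x * (x ^ n / fact n * real n) + x * (x ^ n / fact n)"
      by (simp add: field_simps)
  qed
  ultimately have "(\<lambda>n. x ^ Suc n / fact (Suc n) * (real (Suc n))^2) sums ((x^2 + x) * exp x)"
    by (simp add: algebra_simps power2_eq_square)
  then show ?thesis using sums_Suc_iff[of "\<lambda>k. x ^ k / fact k * (real k)^2"] by simp
qed

context unif begin

lemma support:
  assumes step: "\<And>a b. a \<in> S \<Longrightarrow> b \<in> S \<Longrightarrow> Pm a b \<noteq> 0 \<Longrightarrow> \<bar>\<phi> b - \<phi> a\<bar> \<le> 1"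
  shows "a \<in> S \<Longrightarrow> b \<in> S \<Longrightarrow> mpow S Pm k a b \<noteq> 0 \<Longrightarrow> \<bar>\<phi> b - \<phi> a\<bar> \<le> real k"
proof (induction k arbitrary: a)
  case 0 then show ?case by (simp split: if_splits)
next
  case (Suc k)
  then have "(\<Sum>c\<in>S. Pm a c * mpow S Pm k c b) \<noteq> 0" by simp
  then obtain c where c: "c \<in> S" "Pm a c * mpow S Pm k c b \<noteq> 0"
    by (meson sum.not_neutral_contains_not_neutral)
  then have "\<bar>\<phi> c - \<phi> a\<bar> \<le> 1" "\<bar>\<phi> b - \<phi> c\<bar> \<le> real k"
    using step[of a c] Suc by auto
  then show ?case by simp
qed

lemma moment_gen:
  assumes a: "a \<in> S" and t: "0 \<le> t"
    and w: "\<And>b. b \<in> S \<Longrightarrow> 0 \<le> w b"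
    and bd: "\<And>k b. b \<in> S \<Longrightarrow> mpow S Pm k a b \<noteq> 0 \<Longrightarrow> w b \<le> c k"
    and cs: "(\<lambda>k. (L * t) ^ k / fact k * c k) sums \<sigma>"
  shows "(\<Sum>b\<in>S. Ps t a b * w b) \<le> exp (- L * t) * \<sigma>"
proof -
  have "(\<Sum>b\<in>S. Ps t a b * w b) = exp (- L * t) * (\<Sum>b\<in>S. \<Sum>k. (L * t) ^ k / fact k * mpow S Pm k a b * w b)"
    unfolding Ps_def sum_distrib_left mult.assoc
  proof (intro sum.cong refl arg_cong2[where f="(*)"] refl)
    fix b assume b: "b \<in> S"
    show "(\<Sum>k. (L * t) ^ k / fact k * mpow S Pm k a b) * w b = (\<Sum>k. (L * t) ^ k / fact k * (mpow S Pm k a b * w b))"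
      using suminf_mult2[OF summ_term'[OF a b], where c="w b"] by (simp add: mult.assoc)
  qed
  also have "(\<Sum>b\<in>S. \<Sum>k. (L * t) ^ k / fact k * mpow S Pm k a b * w b)
      = (\<Sum>k. \<Sum>b\<in>S. (L * t) ^ k / fact k * mpow S Pm k a b * w b)"
    by (rule suminf_sum[symmetric], rule summable_mult2, rule summ_term'[OF a])
  also have "\<dots> \<le> \<sigma>"
  proof -
    have le: "(\<Sum>b\<in>S. (L * t) ^ k / fact k * mpow S Pm k a b * w b) \<le> (L * t) ^ k / fact k * c k" for k
    proof -
      have "mpow S Pm k a b * w b \<le> mpow S Pm k a b * c k" if b: "b \<in> S" for b
      proof (cases "mpow S Pm k a b = 0")
        case False then show ?thesis using bd[OF b False] mpow_nonneg[OF a b]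
          by (simp add: mult_left_mono)
      qed simp
      then have "(\<Sum>b\<in>S. mpow S Pm k a b * w b) \<le> (\<Sum>b\<in>S. mpow S Pm k a b * c k)"
        by (rule sum_mono)
      also have "\<dots> = c k" by (simp add: sum_distrib_right[symmetric] mpow_row a)
      finally have "(L * t) ^ k / fact k * (\<Sum>b\<in>S. mpow S Pm k a b * w b) \<le> (L * t) ^ k / fact k * c k"
        using Lpos t by (intro mult_left_mono) auto
      then show ?thesis by (simp add: sum_distrib_left mult.assoc)
    qed
    show ?thesis
    proof -
      have "summable (\<lambda>k. \<Sum>b\<in>S. (L * t) ^ k / fact k * mpow S Pm k a b * w b)"
        by (rule summable_sum, rule summable_mult2, rule summ_term'[OF a])
      then show ?thesis
        using suminf_le[OF le _ sums_summable[OF cs]] sums_unique[OF cs] by auto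
    qed
  qed
  finally show ?thesis by (simp add: mult_left_mono)
qed

lemma moment1:
  assumes step: "\<And>a b. a \<in> S \<Longrightarrow> b \<in> S \<Longrightarrow> Pm a b \<noteq> 0 \<Longrightarrow> \<bar>\<phi> b - \<phi> a\<bar> \<le> 1"
    and a: "a \<in> S" and t: "0 \<le> t"
  shows "(\<Sum>b\<in>S. Ps t a b * \<bar>\<phi> b - \<phi> a\<bar>) \<le> L * t"
proof -
  have "(\<Sum>b\<in>S. Ps t a b * \<bar>\<phi> b - \<phi> a\<bar>) \<le> exp (- L * t) * (L * t * exp (L * t))"
    by (rule moment_gen[OF a t _ _ series_k]) (use support[where \<phi>=\<phi>, OF step a] in auto)
  also have "\<dots> = L * t" by (simp add: mult_exp_exp)
  finally show ?thesis .
qed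

lemma moment2:
  assumes step: "\<And>a b. a \<in> S \<Longrightarrow> b \<in> S \<Longrightarrow> Pm a b \<noteq> 0 \<Longrightarrow> \<bar>\<phi> b - \<phi> a\<bar> \<le> 1"
    and a: "a \<in> S" and t: "0 \<le> t"
  shows "(\<Sum>b\<in>S. Ps t a b * (\<phi> b - \<phi> a)^2) \<le> L * t + (L * t)^2"
proof -
  have "(\<Sum>b\<in>S. Ps t a b * (\<phi> b - \<phi> a)^2) \<le> exp (- L * t) * (((L * t)^2 + L * t) * exp (L * t))"
  proof (rule moment_gen[OF a t _ _ series_k2])
    fix k b assume "b \<in> S" "mpow S Pm k a b \<noteq> 0"
    then have "\<bar>\<phi> b - \<phi> a\<bar> \<le> real k" using support[where \<phi>=\<phi>, OF step a] by auto
    then have "\<bar>\<phi> b - \<phi> a\<bar>^2 \<le> (real k)^2" by (intro power_mono) auto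
    then show "(\<phi> b - \<phi> a)^2 \<le> (real k)^2" by simp
  qed auto
  also have "\<dots> = L * t + (L * t)^2" by (simp add: mult_exp_exp algebra_simps)
  finally show ?thesis .
qed

end

lemma (in prob_space) finite_expect:
  fixes Y :: "'a \<Rightarrow> 'v" and g :: "'v \<Rightarrow> real"
  assumes V: "finite V" and Y: "\<And>\<omega>. \<omega> \<in> space M \<Longrightarrow> Y \<omega> \<in> V"
    and ms: "\<And>v. v \<in> V \<Longrightarrow> {\<omega>\<in>space M. Y \<omega> = v} \<in> sets M"
  shows "integrable M (\<lambda>\<omega>. g (Y \<omega>))"
    and "(\<integral>\<omega>. g (Y \<omega>) \<partial>M) = (\<Sum>v\<in>V. g v * prob {\<omega>\<in>space M. Y \<omega> = v})"
proof -
  have eq: "g (Y \<omega>) = (\<Sum>v\<in>V. g v * indicator {\<omega>\<in>space M. Y \<omega> = v} \<omega>)" if w: "\<omega> \<in> space M" for \<omega>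
  proof -
    have "(\<Sum>v\<in>V. g v * indicator {\<omega>\<in>space M. Y \<omega> = v} \<omega>) = (\<Sum>v\<in>V. if Y \<omega> = v then g v else 0)"
      by (intro sum.cong refl) (auto simp: indicator_def w)
    also have "\<dots> = g (Y \<omega>)" using V Y[OF w] by simp
    finally show ?thesis by simp
  qed
  have fin: "emeasure M A < \<infinity>" for A
    using emeasure_finite[of A] by (simp add: less_top[symmetric])
  have int1: "integrable M (\<lambda>\<omega>. g v * indicator {\<omega>\<in>space M. Y \<omega> = v} \<omega>)" if "v \<in> V" for v
    by (rule integrable_mult_right, rule integrable_real_indicator[OF ms[OF that] fin])
  have int: "integrable M (\<lambda>\<omega>. \<Sum>v\<in>V. g v * indicator {\<omega>\<in>space M. Y \<omega> = v} \<omega>)"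
    by (rule Bochner_Integration.integrable_sum, rule int1)
  show "integrable M (\<lambda>\<omega>. g (Y \<omega>))"
  proof -
    have "integrable M (\<lambda>\<omega>. g (Y \<omega>)) = integrable M (\<lambda>\<omega>. \<Sum>v\<in>V. g v * indicator {\<omega>\<in>space M. Y \<omega> = v} \<omega>)"
      by (rule Bochner_Integration.integrable_cong) (simp_all add: eq)
    then show ?thesis using int by simp
  qed
  have "(\<integral>\<omega>. g (Y \<omega>) \<partial>M) = (\<integral>\<omega>. (\<Sum>v\<in>V. g v * indicator {\<omega>\<in>space M. Y \<omega> = v} \<omega>) \<partial>M)"
    by (rule Bochner_Integration.integral_cong) (simp_all add: eq)
  also have "\<dots> = (\<Sum>v\<in>V. g v * prob {\<omega>\<in>space M. Y \<omega> = v})"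
    by (subst Bochner_Integration.integral_sum[OF int1]) (auto simp: Int_absorb2)
  finally show "(\<integral>\<omega>. g (Y \<omega>) \<partial>M) = (\<Sum>v\<in>V. g v * prob {\<omega>\<in>space M. Y \<omega> = v})" .
qed

lemma sum4: "(\<Sum>v\<in>S\<times>S\<times>S\<times>S. f v) = (\<Sum>a\<in>S. \<Sum>b\<in>S. \<Sum>c\<in>S. \<Sum>e\<in>S. f (a,b,c,e))"
  by (simp add: sum.cartesian_product)

lemma sum2: "(\<Sum>v\<in>S\<times>S. f v) = (\<Sum>a\<in>S. \<Sum>b\<in>S. f (a,b))"
  by (simp add: sum.cartesian_product)

locale mjp = unif S G L for S :: "'s set" and G L +
  fixes M :: "'a measure" and X :: "real \<Rightarrow> 'a \<Rightarrow> 's"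
  assumes prob: "prob_space M"
    and inS: "\<And>t \<omega>. 0 \<le> t \<Longrightarrow> \<omega> \<in> space M \<Longrightarrow> X t \<omega> \<in> S"
    and measX: "\<And>t. 0 \<le> t \<Longrightarrow> X t \<in> measurable M (count_space UNIV)"
    and fidi: "\<And>n ts ss. 0 \<le> ts 0 \<Longrightarrow> (\<forall>k<n. ts k \<le> ts (Suc k)) \<Longrightarrow>
        measure M {\<omega>\<in>space M. \<forall>k\<le>n. X (ts k) \<omega> = ss k} =
        measure M {\<omega>\<in>space M. X (ts 0) \<omega> = ss 0} *
        (\<Prod>k<n. trans_fun S G (ts (Suc k) - ts k) (ss k) (ss (Suc k)))"
begin

sublocale P: prob_space M by (rule prob)

lemma setX: "0 \<le> t \<Longrightarrow> {\<omega>\<in>space M. X t \<omega> = a} \<in> sets M"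
proof -
  assume t: "0 \<le> t"
  have "X t -` {a} \<inter> space M \<in> sets M"
    by (rule measurable_sets[OF measX[OF t]]) simp
  moreover have "X t -` {a} \<inter> space M = {\<omega>\<in>space M. X t \<omega> = a}" by auto
  ultimately show ?thesis by simp
qed

lemma setX2: "0 \<le> t0 \<Longrightarrow> 0 \<le> t1 \<Longrightarrow> {\<omega>\<in>space M. X t0 \<omega> = a \<and> X t1 \<omega> = b} \<in> sets M"
proof -
  assume "0 \<le> t0" "0 \<le> t1"
  then have "{\<omega>\<in>space M. X t0 \<omega> = a} \<inter> {\<omega>\<in>space M. X t1 \<omega> = b} \<in> sets M"
    by (intro sets.Int setX)
  moreover have "{\<omega>\<in>space M. X t0 \<omega> = a} \<inter> {\<omega>\<in>space M. X t1 \<omega> = b} = {\<omega>\<in>space M. X t0 \<omega> = a \<and> X t1 \<omega> = b}" by auto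
  ultimately show ?thesis by simp
qed

lemma setX4: "0 \<le> t0 \<Longrightarrow> 0 \<le> t1 \<Longrightarrow> 0 \<le> t2 \<Longrightarrow> 0 \<le> t3 \<Longrightarrow>
  {\<omega>\<in>space M. X t0 \<omega> = a \<and> X t1 \<omega> = b \<and> X t2 \<omega> = c \<and> X t3 \<omega> = e} \<in> sets M"
proof -
  assume "0 \<le> t0" "0 \<le> t1" "0 \<le> t2" "0 \<le> t3"
  then have "{\<omega>\<in>space M. X t0 \<omega> = a} \<inter> {\<omega>\<in>space M. X t1 \<omega> = b} \<inter> {\<omega>\<in>space M. X t2 \<omega> = c} \<inter> {\<omega>\<in>space M. X t3 \<omega> = e} \<in> sets M"
    by (intro sets.Int setX)
  moreover have "{\<omega>\<in>space M. X t0 \<omega> = a} \<inter> {\<omega>\<in>space M. X t1 \<omega> = b} \<inter> {\<omega>\<in>space M. X t2 \<omega> = c} \<inter> {\<omega>\<in>space M. X t3 \<omega> = e}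
     = {\<omega>\<in>space M. X t0 \<omega> = a \<and> X t1 \<omega> = b \<and> X t2 \<omega> = c \<and> X t3 \<omega> = e}" by auto
  ultimately show ?thesis by simp
qed

lemma fidi2:
  assumes "0 \<le> t0" "t0 \<le> t1" "a \<in> S" "b \<in> S"
  shows "measure M {\<omega>\<in>space M. X t0 \<omega> = a \<and> X t1 \<omega> = b} =
    measure M {\<omega>\<in>space M. X t0 \<omega> = a} * Ps (t1 - t0) a b"
proof -
  have "measure M {\<omega>\<in>space M. \<forall>k\<le>1. X ([t0,t1] ! k) \<omega> = [a,b] ! k} =
        measure M {\<omega>\<in>space M. X ([t0,t1] ! 0) \<omega> = [a,b] ! 0} *
        (\<Prod>k<1. trans_fun S G ([t0,t1] ! (Suc k) - [t0,t1] ! k) ([a,b] ! k) ([a,b] ! (Suc k)))"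
    by (rule fidi) (use assms in auto)
  moreover have "{\<omega>\<in>space M. \<forall>k\<le>1. X ([t0,t1] ! k) \<omega> = [a,b] ! k} = {\<omega>\<in>space M. X t0 \<omega> = a \<and> X t1 \<omega> = b}"
    by (auto simp: le_Suc_eq)
  ultimately show ?thesis using assms by (simp add: trans_eq)
qed

lemma fidi4:
  assumes "0 \<le> t0" "t0 \<le> t1" "t1 \<le> t2" "t2 \<le> t3" "a \<in> S" "b \<in> S" "c \<in> S" "e \<in> S"
  shows "measure M {\<omega>\<in>space M. X t0 \<omega> = a \<and> X t1 \<omega> = b \<and> X t2 \<omega> = c \<and> X t3 \<omega> = e} =
    measure M {\<omega>\<in>space M. X t0 \<omega> = a} * Ps (t1 - t0) a b * Ps (t2 - t1) b c * Ps (t3 - t2) c e"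
proof -
  let ?ts = "[t0,t1,t2,t3]" and ?ss = "[a,b,c,e]"
  have "measure M {\<omega>\<in>space M. \<forall>k\<le>3. X (?ts ! k) \<omega> = ?ss ! k} =
        measure M {\<omega>\<in>space M. X (?ts ! 0) \<omega> = ?ss ! 0} *
        (\<Prod>k<3. trans_fun S G (?ts ! (Suc k) - ?ts ! k) (?ss ! k) (?ss ! (Suc k)))"
    by (rule fidi) (use assms in \<open>auto simp: less_Suc_eq numeral_3_eq_3\<close>)
  moreover have "{\<omega>\<in>space M. \<forall>k\<le>3. X (?ts ! k) \<omega> = ?ss ! k} = {\<omega>\<in>space M. X t0 \<omega> = a \<and> X t1 \<omega> = b \<and> X t2 \<omega> = c \<and> X t3 \<omega> = e}"
    by (auto simp: le_Suc_eq numeral_3_eq_3)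
  ultimately show ?thesis using assms by (simp add: trans_eq numeral_3_eq_3 mult.assoc)
qed

lemma sum_p: "0 \<le> t \<Longrightarrow> (\<Sum>a\<in>S. measure M {\<omega>\<in>space M. X t \<omega> = a}) = 1"
proof -
  assume t: "0 \<le> t"
  have "(\<integral>\<omega>. (\<lambda>_. 1::real) (X t \<omega>) \<partial>M) = (\<Sum>a\<in>S. 1 * measure M {\<omega>\<in>space M. X t \<omega> = a})"
    by (rule P.finite_expect(2)[OF finS]) (auto intro: inS t setX)
  then show ?thesis by (simp add: P.prob_space)
qed

lemma cross:
  assumes step: "\<And>a b. a \<in> S \<Longrightarrow> b \<in> S \<Longrightarrow> Pm a b \<noteq> 0 \<Longrightarrow> \<bar>\<phi> b - \<phi> a\<bar> \<le> 1"
    and t: "0 \<le> t0" "t0 \<le> t1" "t1 \<le> t2" "t2 \<le> t3"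
  shows "(\<integral>\<omega>. \<bar>\<phi> (X t1 \<omega>) - \<phi> (X t0 \<omega>)\<bar> * \<bar>\<phi> (X t3 \<omega>) - \<phi> (X t2 \<omega>)\<bar> \<partial>M)
     \<le> (L * (t1 - t0)) * (L * (t3 - t2))"
proof -
  let ?Y = "\<lambda>\<omega>. (X t0 \<omega>, X t1 \<omega>, X t2 \<omega>, X t3 \<omega>)"
  let ?g = "\<lambda>(a,b,c,e). \<bar>\<phi> b - \<phi> a\<bar> * \<bar>\<phi> e - \<phi> c\<bar>"
  define p where "p a = measure M {\<omega>\<in>space M. X t0 \<omega> = a}" for a
  define m1 where "m1 = L * (t1 - t0)"
  define m3 where "m3 = L * (t3 - t2)"
  let ?P1 = "Ps (t1 - t0)" and ?P2 = "Ps (t2 - t1)" and ?P3 = "Ps (t3 - t2)"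
  define F where "F a b c e = \<bar>\<phi> b - \<phi> a\<bar> * \<bar>\<phi> e - \<phi> c\<bar> * (p a * ?P1 a b * ?P2 b c * ?P3 c e)" for a b c e
  have tt: "0 \<le> t1" "0 \<le> t2" "0 \<le> t3" "0 \<le> t1 - t0" "0 \<le> t2 - t1" "0 \<le> t3 - t2" using t by auto
  have "(\<integral>\<omega>. \<bar>\<phi> (X t1 \<omega>) - \<phi> (X t0 \<omega>)\<bar> * \<bar>\<phi> (X t3 \<omega>) - \<phi> (X t2 \<omega>)\<bar> \<partial>M) = (\<integral>\<omega>. ?g (?Y \<omega>) \<partial>M)"
    by simp
  also have "\<dots> = (\<Sum>v\<in>S\<times>S\<times>S\<times>S. ?g v * measure M {\<omega>\<in>space M. ?Y \<omega> = v})"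
  proof (rule P.finite_expect(2))
    show "finite (S\<times>S\<times>S\<times>S)" using finS by simp
    show "?Y \<omega> \<in> S\<times>S\<times>S\<times>S" if "\<omega> \<in> space M" for \<omega> using inS that t tt by auto
    fix v assume "v \<in> S\<times>S\<times>S\<times>S"
    obtain a b c e where v: "v = (a,b,c,e)" by (cases v) auto
    show "{\<omega>\<in>space M. ?Y \<omega> = v} \<in> sets M" unfolding v using setX4[OF t(1) tt(1-3)] by simp
  qed
  also have "\<dots> = (\<Sum>a\<in>S. \<Sum>b\<in>S. \<Sum>c\<in>S. \<Sum>e\<in>S. F a b c e)"
    unfolding sum4 F_def p_def
    by (intro sum.cong refl) (simp add: fidi4[OF t] mult_ac)
  also have "\<dots> \<le> m1 * m3"
  proof -
    have i1: "(\<Sum>e\<in>S. F a b c e) \<le> (\<bar>\<phi> b - \<phi> a\<bar> * p a * ?P1 a b * ?P2 b c) * m3"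
      if "a \<in> S" "b \<in> S" "c \<in> S" for a b c
    proof -
      have "(\<Sum>e\<in>S. F a b c e) = (\<bar>\<phi> b - \<phi> a\<bar> * p a * ?P1 a b * ?P2 b c) * (\<Sum>e\<in>S. ?P3 c e * \<bar>\<phi> e - \<phi> c\<bar>)"
        unfolding F_def by (simp add: sum_distrib_left mult_ac)
      also have "\<dots> \<le> (\<bar>\<phi> b - \<phi> a\<bar> * p a * ?P1 a b * ?P2 b c) * m3"
        unfolding m3_def
        by (intro mult_left_mono moment1[OF step] that tt mult_nonneg_nonneg Ps_nonneg)
           (auto simp: p_def)
      finally show ?thesis .
    qed
    have i2: "(\<Sum>c\<in>S. \<Sum>e\<in>S. F a b c e) \<le> (\<bar>\<phi> b - \<phi> a\<bar> * p a * ?P1 a b) * m3"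
      if "a \<in> S" "b \<in> S" for a b
    proof -
      have "(\<Sum>c\<in>S. \<Sum>e\<in>S. F a b c e) \<le> (\<Sum>c\<in>S. (\<bar>\<phi> b - \<phi> a\<bar> * p a * ?P1 a b * ?P2 b c) * m3)"
        by (rule sum_mono) (rule i1[OF that])
      also have "\<dots> = (\<bar>\<phi> b - \<phi> a\<bar> * p a * ?P1 a b) * m3 * (\<Sum>c\<in>S. ?P2 b c)"
        by (simp add: sum_distrib_left mult_ac)
      also have "\<dots> = (\<bar>\<phi> b - \<phi> a\<bar> * p a * ?P1 a b) * m3"
        using Ps_row[OF that(2)] by simp
      finally show ?thesis .
    qed
    have i3: "(\<Sum>b\<in>S. \<Sum>c\<in>S. \<Sum>e\<in>S. F a b c e) \<le> p a * m3 * m1" if a: "a \<in> S" for a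
    proof -
      have "(\<Sum>b\<in>S. \<Sum>c\<in>S. \<Sum>e\<in>S. F a b c e) \<le> (\<Sum>b\<in>S. (\<bar>\<phi> b - \<phi> a\<bar> * p a * ?P1 a b) * m3)"
        by (rule sum_mono) (rule i2[OF a])
      also have "\<dots> = p a * m3 * (\<Sum>b\<in>S. ?P1 a b * \<bar>\<phi> b - \<phi> a\<bar>)"
        by (simp add: sum_distrib_left mult_ac)
      also have "\<dots> \<le> p a * m3 * m1"
        unfolding m1_def
        by (intro mult_left_mono moment1[OF step] a tt mult_nonneg_nonneg)
           (use Lpos tt in \<open>auto simp: p_def m3_def\<close>)
      finally show ?thesis .
    qed
    have "(\<Sum>a\<in>S. \<Sum>b\<in>S. \<Sum>c\<in>S. \<Sum>e\<in>S. F a b c e) \<le> (\<Sum>a\<in>S. p a * m3 * m1)"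
      by (rule sum_mono) (rule i3)
    also have "\<dots> = m3 * m1 * (\<Sum>a\<in>S. p a)" by (simp add: sum_distrib_left mult_ac)
    also have "\<dots> = m1 * m3" using sum_p[OF t(1)] unfolding p_def by simp
    finally show ?thesis .
  qed
  finally show ?thesis unfolding m1_def m3_def .
qed

lemma diag:
  assumes step: "\<And>a b. a \<in> S \<Longrightarrow> b \<in> S \<Longrightarrow> Pm a b \<noteq> 0 \<Longrightarrow> \<bar>\<phi> b - \<phi> a\<bar> \<le> 1"
    and t: "0 \<le> t0" "t0 \<le> t1"
  shows "(\<integral>\<omega>. \<bar>\<phi> (X t1 \<omega>) - \<phi> (X t0 \<omega>)\<bar> * \<bar>\<phi> (X t1 \<omega>) - \<phi> (X t0 \<omega>)\<bar> \<partial>M)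
     \<le> L * (t1 - t0) + (L * (t1 - t0))^2"
proof -
  let ?Y = "\<lambda>\<omega>. (X t0 \<omega>, X t1 \<omega>)"
  let ?g = "\<lambda>(a,b). (\<phi> b - \<phi> a)^2"
  define p where "p a = measure M {\<omega>\<in>space M. X t0 \<omega> = a}" for a
  define m where "m = L * (t1 - t0) + (L * (t1 - t0))^2"
  have tt: "0 \<le> t1" "0 \<le> t1 - t0" using t by auto
  have "(\<integral>\<omega>. \<bar>\<phi> (X t1 \<omega>) - \<phi> (X t0 \<omega>)\<bar> * \<bar>\<phi> (X t1 \<omega>) - \<phi> (X t0 \<omega>)\<bar> \<partial>M) = (\<integral>\<omega>. ?g (?Y \<omega>) \<partial>M)"
    by (simp add: power2_eq_square abs_mult_self_eq)
  also have "\<dots> = (\<Sum>v\<in>S\<times>S. ?g v * measure M {\<omega>\<in>space M. ?Y \<omega> = v})"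
  proof (rule P.finite_expect(2))
    show "finite (S\<times>S)" using finS by simp
    show "?Y \<omega> \<in> S\<times>S" if "\<omega> \<in> space M" for \<omega> using inS that t tt by auto
    fix v assume "v \<in> S\<times>S"
    obtain a b where v: "v = (a,b)" by (cases v) auto
    show "{\<omega>\<in>space M. ?Y \<omega> = v} \<in> sets M" unfolding v using setX2[OF t(1) tt(1)] by simp
  qed
  also have "\<dots> = (\<Sum>a\<in>S. p a * (\<Sum>b\<in>S. Ps (t1 - t0) a b * (\<phi> b - \<phi> a)^2))"
    unfolding sum2 p_def
    by (intro sum.cong refl) (simp add: fidi2[OF t] sum_distrib_left mult_ac)
  also have "\<dots> \<le> (\<Sum>a\<in>S. p a * m)"
    unfolding m_def
    by (intro sum_mono mult_left_mono moment2[OF step] tt) (auto simp: p_def)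
  also have "\<dots> = m" using sum_p[OF t(1)] unfolding p_def by (simp add: sum_distrib_right[symmetric])
  finally show ?thesis unfolding m_def .
qed

end

locale mjp_phi = mjp S G L M X for S :: "'s set" and G L and M :: "'a measure" and X +
  fixes \<phi> :: "'s \<Rightarrow> real"
  assumes step: "\<And>a b. a \<in> S \<Longrightarrow> b \<in> S \<Longrightarrow> Pm a b \<noteq> 0 \<Longrightarrow> \<bar>\<phi> b - \<phi> a\<bar> \<le> 1"
begin

definition inc :: "real \<Rightarrow> nat \<Rightarrow> 'a \<Rightarrow> real" where
  "inc h j \<omega> = \<bar>\<phi> (X (real (Suc j) * h) \<omega>) - \<phi> (X (real j * h) \<omega>)\<bar>"

lemma int_pair:
  assumes "0 \<le> t0" "0 \<le> t1" "0 \<le> t2" "0 \<le> t3"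
  shows "integrable M (\<lambda>\<omega>. \<bar>\<phi> (X t1 \<omega>) - \<phi> (X t0 \<omega>)\<bar> * \<bar>\<phi> (X t3 \<omega>) - \<phi> (X t2 \<omega>)\<bar>)"
proof -
  let ?Y = "\<lambda>\<omega>. (X t0 \<omega>, X t1 \<omega>, X t2 \<omega>, X t3 \<omega>)"
  let ?g = "\<lambda>(a,b,c,e). \<bar>\<phi> b - \<phi> a\<bar> * \<bar>\<phi> e - \<phi> c\<bar>"
  have "integrable M (\<lambda>\<omega>. ?g (?Y \<omega>))"
  proof (rule P.finite_expect(1)[where Y="?Y" and V="S\<times>S\<times>S\<times>S"])
    show "finite (S\<times>S\<times>S\<times>S)" using finS by simp
    show "?Y \<omega> \<in> S\<times>S\<times>S\<times>S" if "\<omega> \<in> space M" for \<omega> using inS that assms by auto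
    fix v assume "v \<in> S\<times>S\<times>S\<times>S"
    obtain a b c e where v: "v = (a,b,c,e)" by (cases v) auto
    show "{\<omega>\<in>space M. ?Y \<omega> = v} \<in> sets M" unfolding v using setX4[OF assms] by simp
  qed
  then show ?thesis by simp
qed

lemma int_inc_prod: "0 \<le> h \<Longrightarrow> integrable M (\<lambda>\<omega>. inc h j \<omega> * inc h l \<omega>)"
  unfolding inc_def by (rule int_pair) auto

lemma int_inc: "0 \<le> h \<Longrightarrow> integrable M (\<lambda>\<omega>. inc h j \<omega>)"
proof -
  assume h: "0 \<le> h"
  let ?Y = "\<lambda>\<omega>. (X (real j * h) \<omega>, X (real (Suc j) * h) \<omega>)"
  let ?g = "\<lambda>(a,b). \<bar>\<phi> b - \<phi> a\<bar>"
  have t: "0 \<le> real j * h" "0 \<le> real (Suc j) * h" using h by auto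
  have "integrable M (\<lambda>\<omega>. ?g (?Y \<omega>))"
  proof (rule P.finite_expect(1)[where Y="?Y" and V="S\<times>S"])
    show "finite (S\<times>S)" using finS by simp
    show "?Y \<omega> \<in> S\<times>S" if "\<omega> \<in> space M" for \<omega> using inS that t by auto
    fix v assume "v \<in> S\<times>S"
    obtain a b where v: "v = (a,b)" by (cases v) auto
    show "{\<omega>\<in>space M. ?Y \<omega> = v} \<in> sets M" unfolding v using setX2[OF t] by simp
  qed
  then show ?thesis unfolding inc_def by simp
qed

lemma pair_bound:
  assumes h: "0 \<le> h"
  shows "(\<integral>\<omega>. inc h j \<omega> * inc h l \<omega> \<partial>M) \<le> (L * h)^2 + (if j = l then L * h else 0)"
proof -
  have lt: "(\<integral>\<omega>. inc h j \<omega> * inc h l \<omega> \<partial>M) \<le> (L * h)^2" if jl: "j < l" for j l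
  proof -
    have "real (Suc j) * h \<le> real l * h" using jl h by (intro mult_right_mono) auto
    then have "(\<integral>\<omega>. inc h j \<omega> * inc h l \<omega> \<partial>M) \<le> (L * (real (Suc j) * h - real j * h)) * (L * (real (Suc l) * h - real l * h))"
      unfolding inc_def using h by (intro cross[OF step]) (auto intro: mult_right_mono)
    also have "\<dots> = (L * h)^2" by (simp add: algebra_simps power2_eq_square)
    finally show ?thesis .
  qed
  show ?thesis
  proof (cases j l rule: linorder_cases)
    case less then show ?thesis using lt[OF less] by simp
  next
    case greater
    have "(\<integral>\<omega>. inc h j \<omega> * inc h l \<omega> \<partial>M) = (\<integral>\<omega>. inc h l \<omega> * inc h j \<omega> \<partial>M)"
      by (simp add: mult.commute)
    then show ?thesis using lt[OF greater] greater by simp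
  next
    case equal
    have "(\<integral>\<omega>. inc h j \<omega> * inc h j \<omega> \<partial>M) \<le> L * (real (Suc j) * h - real j * h) + (L * (real (Suc j) * h - real j * h))^2"
      unfolding inc_def using h by (intro diag[OF step]) (auto intro: mult_right_mono)
    also have "\<dots> = L * h + (L * h)^2" by (simp add: algebra_simps)
    finally show ?thesis using equal by simp
  qed
qed

lemma sq_bound:
  assumes J: "finite J" and h: "0 \<le> h"
  shows "(\<integral>\<omega>. (\<Sum>j\<in>J. inc h j \<omega>)^2 \<partial>M) \<le> (real (card J) * (L * h))^2 + real (card J) * (L * h)"
proof -
  have "(\<integral>\<omega>. (\<Sum>j\<in>J. inc h j \<omega>)^2 \<partial>M) = (\<integral>\<omega>. (\<Sum>j\<in>J. \<Sum>l\<in>J. inc h j \<omega> * inc h l \<omega>) \<partial>M)"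
    by (simp add: power2_eq_square sum_product)
  also have "\<dots> = (\<Sum>j\<in>J. \<Sum>l\<in>J. (\<integral>\<omega>. inc h j \<omega> * inc h l \<omega> \<partial>M))"
    by (simp add: Bochner_Integration.integral_sum int_inc_prod[OF h] Bochner_Integration.integrable_sum)
  also have "\<dots> \<le> (\<Sum>j\<in>J. \<Sum>l\<in>J. (L * h)^2 + (if j = l then L * h else 0))"
    by (intro sum_mono pair_bound[OF h])
  also have "\<dots> = (real (card J) * (L * h))^2 + real (card J) * (L * h)"
    using J by (simp add: sum.distrib power2_eq_square algebra_simps)
  finally show ?thesis .
qed

lemma tail:
  assumes J: "finite J" and h: "0 \<le> h" and c: "0 < c"
  shows "measure M {\<omega>\<in>space M. c \<le> (\<Sum>j\<in>J. inc h j \<omega>)}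
     \<le> ((real (card J) * (L * h))^2 + real (card J) * (L * h)) / c^2"
proof -
  let ?f = "\<lambda>\<omega>. (\<Sum>j\<in>J. inc h j \<omega>)"
  have intf: "integrable M (\<lambda>\<omega>. (?f \<omega>)^2)"
    by (simp add: power2_eq_square sum_product Bochner_Integration.integrable_sum int_inc_prod[OF h])
  have mf: "?f \<in> borel_measurable M"
    by (rule borel_measurable_sum, rule borel_measurable_integrable, rule int_inc[OF h])
  have sf: "{\<omega>\<in>space M. c\<^sup>2 \<le> (?f \<omega>)^2} \<in> sets M"
    using borel_measurable_integrable[OF intf] unfolding borel_measurable_iff_ge by blast
  have "{\<omega>\<in>space M. c \<le> ?f \<omega>} \<subseteq> {\<omega>\<in>space M. c\<^sup>2 \<le> (?f \<omega>)^2}"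
    using c by (auto intro: power_mono)
  then have "measure M {\<omega>\<in>space M. c \<le> ?f \<omega>} \<le> measure M {\<omega>\<in>space M. c\<^sup>2 \<le> (?f \<omega>)^2}"
    by (rule P.finite_measure_mono[OF _ sf])
  also have "\<dots> \<le> (\<integral>\<omega>. (?f \<omega>)^2 \<partial>M) / c^2"
    by (rule integral_Markov_inequality_measure[OF intf sets.top]) (use c in auto)
  also have "\<dots> \<le> ((real (card J) * (L * h))^2 + real (card J) * (L * h)) / c^2"
    using c by (intro divide_right_mono sq_bound[OF J h]) auto
  finally show ?thesis .
qed

end

lemma telescope:
  fixes f :: "nat \<Rightarrow> real"
  assumes "n1 \<le> n2"
  shows "\<bar>f n2 - f n1\<bar> \<le> (\<Sum>j\<in>{n1..<n2}. \<bar>f (Suc j) - f j\<bar>)"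
  using assms
proof (induction n2 rule: dec_induct)
  case base then show ?case by simp
next
  case (step n)
  have "\<bar>f (Suc n) - f n1\<bar> \<le> \<bar>f (Suc n) - f n\<bar> + \<bar>f n - f n1\<bar>"
    using abs_triangle_ineq[of "f (Suc n) - f n" "f n - f n1"] by simp
  also have "\<dots> \<le> \<bar>f (Suc n) - f n\<bar> + (\<Sum>j\<in>{n1..<n}. \<bar>f (Suc j) - f j\<bar>)" using step.IH by simp
  also have "\<dots> = (\<Sum>j\<in>{n1..<Suc n}. \<bar>f (Suc j) - f j\<bar>)"
    using step.hyps by (simp add: sum.atLeastLessThan_Suc)
  finally show ?case .
qed

lemma cadlag_right:
  assumes "cadlag_step p" "0 \<le> t"
  shows "\<exists>e>0. \<forall>u. t \<le> u \<and> u < t + e \<longrightarrow> p u = p t"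
proof -
  have "\<exists>e>0. \<forall>s\<in>{t..<t+e}. p s = p t"
    using assms(1)[unfolded cadlag_step_def, rule_format, OF assms(2)] by (rule conjunct1)
  then obtain e where e: "e > 0" "\<forall>s\<in>{t..<t+e}. p s = p t" by (elim exE conjE)
  show ?thesis
  proof (intro exI[of _ e] conjI allI impI)
    show "0 < e" by (rule e(1))
    fix u assume u: "t \<le> u \<and> u < t + e"
    then have "u \<in> {t..<t+e}" by simp
    then show "p u = p t" using e(2) by blast
  qed
qed

lemma outer_prob_le:
  assumes "B \<in> sets M" "A \<inter> space M \<subseteq> B"
  shows "outer_prob M A \<le> measure M B"
  unfolding outer_prob_def
proof (rule cInf_lower)
  show "measure M B \<in> {measure M B' | B'. B' \<in> sets M \<and> A \<inter> space M \<subseteq> B'}" using assms by blast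
  show "bdd_below {measure M B' | B'. B' \<in> sets M \<and> A \<inter> space M \<subseteq> B'}"
    by (rule bdd_belowI[where m=0]) auto
qed

lemma outer_prob_nonneg: "0 \<le> outer_prob M A"
  unfolding outer_prob_def
proof (rule cInf_greatest)
  have "measure M (space M) \<in> {measure M B' | B'. B' \<in> sets M \<and> A \<inter> space M \<subseteq> B'}" by blast
  then show "{measure M B' | B'. B' \<in> sets M \<and> A \<inter> space M \<subseteq> B'} \<noteq> {}" by blast
qed auto


context mjp_phi begin

lemma main_bound:
  assumes cad: "AE \<omega> in M. cadlag_step (\<lambda>t. X t \<omega>)"
    and \<delta>: "0 < \<delta>" and c: "0 < c" and T: "0 \<le> T"
  shows "outer_prob M {\<omega>\<in>space M. \<exists>t\<in>{0..T}. \<exists>s\<in>{0..T}. \<bar>t - s\<bar> \<le> \<delta> \<and> 2 * c < \<bar>\<phi> (X t \<omega>) - \<phi> (X s \<omega>)\<bar>}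
     \<le> real (nat \<lceil>T / (2 * \<delta>)\<rceil> + 2) * (((L * (2 * \<delta>))^2 + L * (2 * \<delta>)) / c^2)"
proof -
  define \<beta> where "\<beta> = 2 * \<delta>"
  define nb where "nb = nat \<lceil>T / \<beta>\<rceil> + 2"
  define K where "K m = (2::nat) ^ m" for m
  define h where "h m = \<beta> / real (K m)" for m
  define Blk where "Blk m b = {\<omega>\<in>space M. c \<le> (\<Sum>j\<in>{b * K m..<Suc b * K m}. inc (h m) j \<omega>)}" for m b
  define Gm where "Gm m = (\<Union>b\<in>{..<nb}. Blk m b)" for m
  define H where "H m0 = (\<Inter>m\<in>{m0..}. Gm m)" for m0
  define q where "q = ((L * \<beta>)^2 + L * \<beta>) / c^2"
  define E where "E = {\<omega>\<in>space M. \<exists>t\<in>{0..T}. \<exists>s\<in>{0..T}. \<bar>t - s\<bar> \<le> \<delta> \<and> 2 * c < \<bar>\<phi> (X t \<omega>) - \<phi> (X s \<omega>)\<bar>}"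
  have \<beta>pos: "0 < \<beta>" unfolding \<beta>_def using \<delta> by simp
  have Kpos: "0 < K m" for m unfolding K_def by simp
  have hpos: "0 < h m" for m unfolding h_def using \<beta>pos Kpos[of m] by simp
  have Kh: "real (K m) * h m = \<beta>" for m unfolding h_def using Kpos[of m] by simp
  have Blk_sets: "Blk m b \<in> sets M" for m b
  proof -
    have "(\<lambda>\<omega>. \<Sum>j\<in>{b * K m..<Suc b * K m}. inc (h m) j \<omega>) \<in> borel_measurable M"
      by (rule borel_measurable_sum, rule borel_measurable_integrable, rule int_inc)
         (use hpos[of m] in simp)
    then show ?thesis unfolding Blk_def borel_measurable_iff_ge by blast
  qed
  have Blk_meas: "measure M (Blk m b) \<le> q" for m b
  proof -
    have "measure M (Blk m b) \<le> ((real (card {b * K m..<Suc b * K m}) * (L * h m))^2 + real (card {b * K m..<Suc b * K m}) * (L * h m)) / c^2"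
      unfolding Blk_def by (rule tail) (use hpos[of m] c in auto)
    also have "real (card {b * K m..<Suc b * K m}) * (L * h m) = L * \<beta>"
      using Kh[of m] by (simp add: algebra_simps)
    finally show ?thesis unfolding q_def .
  qed
  have Gm_sets: "Gm m \<in> sets M" for m unfolding Gm_def using Blk_sets by auto
  have Gm_meas: "measure M (Gm m) \<le> real nb * q" for m
  proof -
    have "measure M (Gm m) \<le> (\<Sum>b<nb. measure M (Blk m b))"
      unfolding Gm_def by (rule measure_UNION_le) (auto intro: Blk_sets)
    also have "\<dots> \<le> (\<Sum>b<nb. q)" by (rule sum_mono) (rule Blk_meas)
    finally show ?thesis by simp
  qed
  have H_sets: "H m0 \<in> sets M" for m0
    unfolding H_def by (rule sets.countable_INT') (auto intro: Gm_sets)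
  have H_meas: "measure M (H m0) \<le> real nb * q" for m0
  proof -
    have "H m0 \<subseteq> Gm m0" unfolding H_def by auto
    then have "measure M (H m0) \<le> measure M (Gm m0)" by (rule P.finite_measure_mono[OF _ Gm_sets])
    then show ?thesis using Gm_meas[of m0] by simp
  qed
  have incH: "incseq H" unfolding incseq_def H_def by auto
  have limH: "measure M (\<Union>m0. H m0) \<le> real nb * q"
  proof (rule LIMSEQ_le_const2)
    show "(\<lambda>i. measure M (H i)) \<longlonglongrightarrow> measure M (\<Union>m0. H m0)"
      by (rule P.finite_Lim_measure_incseq) (use H_sets incH in auto)
  qed (use H_meas in auto)
  obtain Nul where Nul: "{\<omega>\<in>space M. \<not> cadlag_step (\<lambda>t. X t \<omega>)} \<subseteq> Nul" "emeasure M Nul = 0" "Nul \<in> sets M"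
    using AE_E[OF cad] by blast
  have cover: "E \<inter> space M \<subseteq> Nul \<union> (\<Union>m0. H m0)"
  proof
    fix \<omega> assume w: "\<omega> \<in> E \<inter> space M"
    show "\<omega> \<in> Nul \<union> (\<Union>m0. H m0)"
    proof (cases "cadlag_step (\<lambda>t. X t \<omega>)")
      case False then show ?thesis using w Nul(1) by auto
    next
      case True
      from w obtain t s where ts: "t \<in> {0..T}" "s \<in> {0..T}" "\<bar>t - s\<bar> \<le> \<delta>" "2 * c < \<bar>\<phi> (X t \<omega>) - \<phi> (X s \<omega>)\<bar>"
        unfolding E_def by blast
      obtain t1 s1 where ts1: "0 \<le> t1" "t1 \<le> s1" "s1 \<le> T" "s1 - t1 \<le> \<delta>" "2 * c < \<bar>\<phi> (X s1 \<omega>) - \<phi> (X t1 \<omega>)\<bar>"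
      proof (cases "t \<le> s")
        case True then show ?thesis using ts that[of t s] by (auto simp: abs_minus_commute)
      next
        case False then show ?thesis using ts that[of s t] by auto
      qed
      obtain e1 where e1: "e1 > 0" "\<And>u. t1 \<le> u \<Longrightarrow> u < t1 + e1 \<Longrightarrow> X u \<omega> = X t1 \<omega>"
        using cadlag_right[OF True ts1(1)] by blast
      obtain e2 where e2: "e2 > 0" "\<And>u. s1 \<le> u \<Longrightarrow> u < s1 + e2 \<Longrightarrow> X u \<omega> = X s1 \<omega>"
        using cadlag_right[OF True, of s1] ts1 by auto
      define \<eta> where "\<eta> = min (min e1 e2) \<delta>"
      have \<eta>pos: "0 < \<eta>" unfolding \<eta>_def using e1 e2 \<delta> by simp
      obtain m0 where m0: "\<beta> / \<eta> < 2 ^ m0" using real_arch_pow[of 2 "\<beta> / \<eta>"] by auto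
      have "\<omega> \<in> H m0" unfolding H_def
      proof (rule InterI, clarsimp)
        fix m assume mm: "m0 \<le> m"
        let ?h = "h m" and ?K = "K m"
        have "(2::real) ^ m0 \<le> 2 ^ m" using mm by (intro power_increasing) auto
        then have "\<beta> / \<eta> < 2 ^ m" using m0 by linarith
        then have "\<beta> / \<eta> < real ?K" unfolding K_def by simp
        then have "\<beta> < \<eta> * real ?K" using \<eta>pos by (simp add: field_simps)
        then have hle: "?h < \<eta>" unfolding h_def using Kpos[of m] by (simp add: field_simps)
        have hp: "0 < ?h" by (rule hpos)
        define kt where "kt = nat \<lceil>t1 / ?h\<rceil>"
        define ks where "ks = nat \<lceil>s1 / ?h\<rceil>"
        have ktr: "real kt = of_int \<lceil>t1 / ?h\<rceil>" unfolding kt_def using ts1 hp by simp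
        have ksr: "real ks = of_int \<lceil>s1 / ?h\<rceil>" unfolding ks_def using ts1 hp by simp
        have kt1: "t1 \<le> real kt * ?h" "real kt * ?h < t1 + ?h"
        proof -
          have c1: "t1 / ?h \<le> of_int \<lceil>t1 / ?h\<rceil>" by (rule le_of_int_ceiling)
          have c2: "of_int \<lceil>t1 / ?h\<rceil> < t1 / ?h + 1" using ceiling_correct[of "t1 / ?h"] by linarith
          have "t1 / ?h * ?h \<le> of_int \<lceil>t1 / ?h\<rceil> * ?h" using c1 hp by (intro mult_right_mono) auto
          then show "t1 \<le> real kt * ?h" unfolding ktr using hp by simp
          have "of_int \<lceil>t1 / ?h\<rceil> * ?h < (t1 / ?h + 1) * ?h" using c2 hp by (intro mult_strict_right_mono) auto
          then show "real kt * ?h < t1 + ?h" unfolding ktr using hp by (simp add: distrib_right)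
        qed
        have ks1: "s1 \<le> real ks * ?h" "real ks * ?h < s1 + ?h"
        proof -
          have c1: "s1 / ?h \<le> of_int \<lceil>s1 / ?h\<rceil>" by (rule le_of_int_ceiling)
          have c2: "of_int \<lceil>s1 / ?h\<rceil> < s1 / ?h + 1" using ceiling_correct[of "s1 / ?h"] by linarith
          have "s1 / ?h * ?h \<le> of_int \<lceil>s1 / ?h\<rceil> * ?h" using c1 hp by (intro mult_right_mono) auto
          then show "s1 \<le> real ks * ?h" unfolding ksr using hp by simp
          have "of_int \<lceil>s1 / ?h\<rceil> * ?h < (s1 / ?h + 1) * ?h" using c2 hp by (intro mult_strict_right_mono) auto
          then show "real ks * ?h < s1 + ?h" unfolding ksr using hp by (simp add: distrib_right)
        qed
        have Xt: "X (real kt * ?h) \<omega> = X t1 \<omega>"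
          using e1(2)[OF kt1(1)] kt1(2) hle unfolding \<eta>_def by auto
        have Xs: "X (real ks * ?h) \<omega> = X s1 \<omega>"
          using e2(2)[OF ks1(1)] ks1(2) hle unfolding \<eta>_def by auto
        have ktks: "kt \<le> ks" unfolding kt_def ks_def
          using ts1 hp by (intro nat_mono ceiling_mono divide_right_mono) auto
        have "(real ks - real kt) * ?h < \<beta>"
          using ks1 kt1 ts1 hle unfolding \<beta>_def \<eta>_def by (simp add: algebra_simps)
        then have "(real ks - real kt) * ?h < real ?K * ?h" using Kh[of m] by simp
        then have "real ks - real kt < real ?K" using hp by simp
        then have ksK: "ks < kt + ?K" by linarith
        define b where "b = kt div ?K"
        have b1: "b * ?K \<le> kt" unfolding b_def by (rule div_times_less_eq_dividend)
        have b2: "kt < Suc b * ?K"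
        proof -
          have e1: "kt div ?K * ?K + kt mod ?K = kt" by (rule div_mult_mod_eq)
          have e2: "kt mod ?K < ?K" using Kpos[of m] by (rule mod_less_divisor)
          show ?thesis unfolding b_def mult_Suc using e1 e2 by linarith
        qed
        have b3: "ks \<le> Suc (Suc b) * ?K" using ksK b2 by simp
        have "real b * \<beta> = real (b * ?K) * ?h" using Kh[of m] by (simp add: algebra_simps)
        also have "\<dots> \<le> real kt * ?h"
        proof -
          have "real (b * ?K) \<le> real kt" using b1 by (simp only: of_nat_le_iff)
          then show ?thesis using hp by (intro mult_right_mono) auto
        qed
        also have "\<dots> < T + \<beta>" using kt1 ts1 hle unfolding \<eta>_def \<beta>_def by simp
        finally have "real b < T / \<beta> + 1" using \<beta>pos by (simp add: field_simps)
        moreover have "T / \<beta> \<le> of_int \<lceil>T / \<beta>\<rceil>" by (rule le_of_int_ceiling)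
        moreover have "real (nat \<lceil>T / \<beta>\<rceil>) = of_int \<lceil>T / \<beta>\<rceil>" using T \<beta>pos by simp
        ultimately have bnb: "Suc b < nb" unfolding nb_def by linarith
        let ?f = "\<lambda>j. \<phi> (X (real j * ?h) \<omega>)"
        have "2 * c < \<bar>?f ks - ?f kt\<bar>" using ts1(5) Xt Xs by simp
        also have "\<dots> \<le> (\<Sum>j\<in>{kt..<ks}. \<bar>?f (Suc j) - ?f j\<bar>)" by (rule telescope[OF ktks])
        also have "\<dots> = (\<Sum>j\<in>{kt..<ks}. inc ?h j \<omega>)" unfolding inc_def by simp
        also have "\<dots> \<le> (\<Sum>j\<in>{b * ?K..<Suc (Suc b) * ?K}. inc ?h j \<omega>)"
          by (rule sum_mono2) (use b1 b3 in \<open>auto simp: inc_def\<close>)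
        also have "\<dots> = (\<Sum>j\<in>{b * ?K..<Suc b * ?K}. inc ?h j \<omega>) + (\<Sum>j\<in>{Suc b * ?K..<Suc (Suc b) * ?K}. inc ?h j \<omega>)"
          by (rule sum.atLeastLessThan_concat[symmetric]) auto
        finally have "c \<le> (\<Sum>j\<in>{b * ?K..<Suc b * ?K}. inc ?h j \<omega>) \<or> c \<le> (\<Sum>j\<in>{Suc b * ?K..<Suc (Suc b) * ?K}. inc ?h j \<omega>)"
          by linarith
        then have "\<omega> \<in> Blk m b \<or> \<omega> \<in> Blk m (Suc b)" unfolding Blk_def using w by auto
        then show "\<omega> \<in> Gm m" unfolding Gm_def using bnb by auto
      qed
      then show ?thesis by auto
    qed
  qed
  have "outer_prob M E \<le> measure M (Nul \<union> (\<Union>m0. H m0))"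
    by (rule outer_prob_le[OF _ cover]) (use Nul(3) H_sets in auto)
  also have "\<dots> \<le> measure M Nul + measure M (\<Union>m0. H m0)"
    by (rule measure_Un_le) (use Nul(3) H_sets in auto)
  also have "\<dots> \<le> real nb * q" using limH Nul(2) by (simp add: measure_def)
  finally have "outer_prob M E \<le> real nb * q" .
  then show ?thesis by (simp add: E_def nb_def q_def \<beta>_def)
qed

end

definition cnt :: "nat \<Rightarrow> 'x list \<Rightarrow> 'x \<Rightarrow> real" where
  "cnt N xs z = real (card {i. i < N \<and> xs ! i = z})"

lemma cnt_sum: "cnt N xs z = (\<Sum>i<N. if xs ! i = z then 1 else 0)"
proof -
  have "{i. i < N \<and> xs ! i = z} = {i\<in>{..<N}. xs ! i = z}" by auto
  then have "cnt N xs z = real (card {i\<in>{..<N}. xs ! i = z})" unfolding cnt_def by simp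
  also have "\<dots> = (\<Sum>i\<in>{i\<in>{..<N}. xs ! i = z}. (1::real))" by (simp only: real_of_card)
  also have "\<dots> = (\<Sum>i<N. if xs ! i = z then 1 else 0)" by (rule sum.inter_filter) simp
  finally show ?thesis .
qed

lemma emp_cnt: "emp N xs $ z = cnt N xs z / real N"
  unfolding emp_def cnt_def by simp

lemma cnt_total: "(\<Sum>z\<in>UNIV. cnt N xs (z::'x::finite)) = real N"
proof -
  have "(\<Sum>z\<in>UNIV. cnt N xs z) = (\<Sum>i<N. \<Sum>z\<in>UNIV. if xs ! i = z then 1 else 0)"
    unfolding cnt_sum by (rule sum.swap)
  also have "\<dots> = (\<Sum>i<N. 1)" by simp
  finally show ?thesis by simp
qed

lemma emp_prob: "1 \<le> N \<Longrightarrow> emp N (xs :: 'x::finite list) \<in> prob_vecs"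
  unfolding prob_vecs_def
proof (intro CollectI conjI allI)
  fix z show "0 \<le> emp N xs $ z" unfolding emp_cnt cnt_def by simp
next
  assume N: "1 \<le> N"
  have "(\<Sum>z\<in>UNIV. emp N xs $ z) = (\<Sum>z\<in>UNIV. cnt N xs z) / real N"
    unfolding emp_cnt by (simp add: sum_divide_distrib)
  also have "\<dots> = 1" using N by (simp add: cnt_total)
  finally show "(\<Sum>z\<in>UNIV. emp N xs $ z) = 1" .
qed

lemma cnt_upd:
  assumes "length xs = N" "i < N" "y \<noteq> xs ! i"
  shows "cnt N (xs[i := y]) z = cnt N xs z + (if z = y then 1 else 0) - (if z = xs ! i then 1 else 0)"
proof -
  have "cnt N (xs[i := y]) z - cnt N xs z
      = (\<Sum>j<N. (if xs[i := y] ! j = z then 1 else 0) - (if xs ! j = z then 1 else 0))"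
    unfolding cnt_sum by (simp add: sum_subtractf)
  also have "\<dots> = (\<Sum>j<N. if j = i then (if y = z then 1 else 0) - (if xs ! i = z then 1 else 0) else 0)"
    by (intro sum.cong refl) (use assms in auto)
  also have "\<dots> = (if y = z then 1 else 0) - (if xs ! i = z then 1 else 0)"
    using assms by simp
  finally show ?thesis by auto
qed

lemma emp_upd:
  assumes "length xs = N" "i < N" "y \<noteq> xs ! i"
  shows "emp N (xs[i := y]) = emp N xs + (axis y 1 - axis (xs ! i) 1) /\<^sub>R real N"
proof (rule vec_eq_iff[THEN iffD2], rule allI)
  fix z
  show "emp N (xs[i := y]) $ z = (emp N xs + (axis y 1 - axis (xs ! i) 1) /\<^sub>R real N) $ z"
  proof -
    have N: "0 < real N" using assms by simp
    show ?thesis unfolding emp_cnt cnt_upd[OF assms]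
      using N by (simp add: emp_cnt axis_def field_simps)
  qed
qed

lemma configs_finite: "finite (configs N :: ('x::finite) list set)"
proof -
  have "configs N = {xs :: 'x list. set xs \<subseteq> UNIV \<and> length xs = N}" unfolding configs_def by auto
  then show ?thesis using finite_lists_length_eq[of "UNIV :: 'x set" N] by simp
qed

lemma gen_entry: "gen_matrix (genL K AN N) a b =
  (\<Sum>i<N. \<Sum>y\<in>UNIV. if y = a ! i then 0 else
     ((if a[i := y] = b then 1 else 0) - (if a = b then 1 else 0)) * rateQ K AN N (emp N a) (a ! i) y)"
  by (simp add: gen_matrix_def genL_def)

lemma upd_ne: "length a = N \<Longrightarrow> i < N \<Longrightarrow> y \<noteq> a ! i \<Longrightarrow> a[i := y] \<noteq> a"
  by (metis nth_list_update_eq)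

lemma gen_offd:
  assumes R: "\<And>i y. i < N \<Longrightarrow> y \<noteq> a ! i \<Longrightarrow> 0 \<le> rateQ K AN N (emp N a) (a ! i) y"
    and ab: "a \<noteq> b"
  shows "0 \<le> gen_matrix (genL K AN N) a b"
  unfolding gen_entry using ab by (auto intro!: sum_nonneg R)

lemma gen_diag:
  fixes a :: "'x::finite list"
  assumes a: "a \<in> configs N"
    and R: "\<And>i y. i < N \<Longrightarrow> y \<noteq> a ! i \<Longrightarrow> rateQ K AN N (emp N a) (a ! i) y \<le> \<rho>"
    and \<rho>: "0 \<le> \<rho>"
  shows "- gen_matrix (genL K AN N) a a \<le> real N * (real CARD('x::finite) * \<rho>)"
proof -
  have len: "length a = N" using a unfolding configs_def by simp
  have "- gen_matrix (genL K AN N) a a =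
    (\<Sum>i<N. \<Sum>y\<in>UNIV. if y = a ! i then 0 else rateQ K AN N (emp N a) (a ! i) (y::'x))"
    unfolding gen_entry sum_negf[symmetric] by (intro sum.cong refl) (auto simp: upd_ne[OF len])
  also have "\<dots> \<le> (\<Sum>i<N. \<Sum>y\<in>(UNIV::'x set). \<rho>)"
    by (intro sum_mono) (auto intro: R \<rho>)
  finally show ?thesis by simp
qed

lemma gen_rows:
  fixes a :: "'x::finite list"
  assumes a: "a \<in> configs N"
  shows "(\<Sum>b\<in>configs N. gen_matrix (genL K AN N) a b) = 0"
proof -
  have len: "length a = N" using a unfolding configs_def by simp
  have "(\<Sum>b\<in>configs N. gen_matrix (genL K AN N) a b) =
    (\<Sum>i<N. \<Sum>b\<in>configs N. \<Sum>y\<in>UNIV. if y = a ! i then 0 else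
     ((if a[i := y] = b then 1 else 0) - (if a = b then 1 else 0)) * rateQ K AN N (emp N a) (a ! i) y)"
    unfolding gen_entry by (rule sum.swap)
  also have "\<dots> = (\<Sum>i<N. \<Sum>y\<in>UNIV. \<Sum>b\<in>configs N. if y = a ! i then 0 else
     ((if a[i := y] = b then 1 else 0) - (if a = b then 1 else 0)) * rateQ K AN N (emp N a) (a ! i) y)"
    by (intro sum.cong refl) (rule sum.swap)
  also have "\<dots> = (\<Sum>i<N. \<Sum>y\<in>(UNIV::'x set). 0)"
  proof (intro sum.cong refl)
    fix i and y :: 'x assume i: "i \<in> {..<N}" and "y \<in> UNIV"
    have c1: "a[i := y] \<in> configs N" using len unfolding configs_def by simp
    show "(\<Sum>b\<in>configs N. if y = a ! i then 0 else
     ((if a[i := y] = b then 1 else 0) - (if a = b then 1 else 0)) * rateQ K AN N (emp N a) (a ! i) y) = 0"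
    proof (cases "y = a ! i")
      case False
      have "(\<Sum>b\<in>configs N. ((if a[i := y] = b then 1 else 0) - (if a = b then 1 else 0)) * rateQ K AN N (emp N a) (a ! i) y)
        = ((\<Sum>b\<in>configs N. if a[i := y] = b then 1 else 0) - (\<Sum>b\<in>configs N. if a = b then 1 else 0)) * rateQ K AN N (emp N a) (a ! i) y"
        by (simp only: sum_distrib_right[symmetric] sum_subtractf)
      also have "\<dots> = 0"
      proof -
        have f: "finite (configs N :: 'x list set)" by (rule configs_finite)
        have "(\<Sum>b\<in>configs N. if a[i := y] = b then 1 else 0) = (1::real)" using c1 f by (simp add: sum.delta)
        moreover have "(\<Sum>b\<in>configs N. if a = b then 1 else 0) = (1::real)" using a f by (simp add: sum.delta)
        ultimately show ?thesis by simp
      qed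
      finally show ?thesis using False by simp
    qed simp
  qed
  finally show ?thesis by simp
qed

lemma gen_support:
  assumes "gen_matrix (genL K AN N) a b \<noteq> 0" "a \<noteq> b"
  shows "\<exists>i<N. \<exists>y. y \<noteq> a ! i \<and> b = a[i := y]"
proof (rule ccontr)
  assume no: "\<not> ?thesis"
  have "gen_matrix (genL K AN N) a b = 0"
    unfolding gen_entry using no assms(2) by (intro sum.neutral ballI) auto
  then show False using assms(1) by simp
qed

lemma prob_vecs_closed: "closed (prob_vecs :: (real ^ 'x::finite) set)"
proof -
  have "prob_vecs = {\<mu> :: real ^ 'x. (\<forall>x. 0 \<le> \<mu> $ x) \<and> (\<Sum>x\<in>UNIV. \<mu> $ x) = 1}"
    unfolding prob_vecs_def ..
  also have "closed \<dots>"
    by (intro closed_Collect_conj closed_Collect_all closed_Collect_le closed_Collect_eq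
        continuous_intros continuous_on_component continuous_on_id)
  finally show ?thesis .
qed

lemma prob_vecs_bounded: "bounded (prob_vecs :: (real ^ 'x::finite) set)"
proof (rule boundedI)
  fix \<mu> :: "real ^ 'x" assume "\<mu> \<in> prob_vecs"
  then have "(\<forall>x. 0 \<le> \<mu> $ x) \<and> (\<Sum>x\<in>UNIV. \<mu> $ x) = 1" unfolding prob_vecs_def by simp
  then have "(\<Sum>x\<in>UNIV. \<bar>\<mu> $ x\<bar>) = 1" by simp
  then show "norm \<mu> \<le> 1" using norm_le_l1_cart[of \<mu>] by simp
qed

lemma prob_vecs_compact: "compact (prob_vecs :: (real ^ 'x::finite) set)"
  by (simp add: compact_eq_bounded_closed prob_vecs_closed prob_vecs_bounded)

lemma prob_vecs_convex: "convex (prob_vecs :: (real ^ 'x::finite) set)"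
  unfolding convex_def
proof (intro ballI allI impI)
  fix x y :: "real ^ 'x" and u v :: real
  assume x: "x \<in> prob_vecs" and y: "y \<in> prob_vecs" and uv: "0 \<le> u" "0 \<le> v" "u + v = 1"
  have x1: "\<forall>z. 0 \<le> x $ z" "(\<Sum>z\<in>UNIV. x $ z) = 1" using x unfolding prob_vecs_def by auto
  have y1: "\<forall>z. 0 \<le> y $ z" "(\<Sum>z\<in>UNIV. y $ z) = 1" using y unfolding prob_vecs_def by auto
  have "\<forall>z. 0 \<le> (u *\<^sub>R x + v *\<^sub>R y) $ z" using x1 y1 uv by simp
  moreover have "(\<Sum>z\<in>UNIV. (u *\<^sub>R x + v *\<^sub>R y) $ z) = u * (\<Sum>z\<in>UNIV. x $ z) + v * (\<Sum>z\<in>UNIV. y $ z)"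
    by (simp add: sum.distrib sum_distrib_left)
  ultimately show "u *\<^sub>R x + v *\<^sub>R y \<in> prob_vecs" using x1 y1 uv unfolding prob_vecs_def by simp
qed

lemma prob_vecs_norm: "\<mu> \<in> prob_vecs \<Longrightarrow> norm (\<mu> :: real ^ 'x::finite) \<le> 1"
proof -
  assume "\<mu> \<in> prob_vecs"
  then have "(\<forall>x. 0 \<le> \<mu> $ x) \<and> (\<Sum>x\<in>UNIV. \<mu> $ x) = 1" unfolding prob_vecs_def by simp
  then have "(\<Sum>x\<in>UNIV. \<bar>\<mu> $ x\<bar>) = 1" by simp
  then show "norm \<mu> \<le> 1" using norm_le_l1_cart[of \<mu>] by simp
qed

lemma prob_vecs_comp: "\<mu> \<in> prob_vecs \<Longrightarrow> 0 \<le> \<mu> $ z \<and> \<mu> $ z \<le> 1"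
proof -
  assume m: "\<mu> \<in> prob_vecs"
  have "0 \<le> \<mu> $ z" using m unfolding prob_vecs_def by simp
  moreover have "\<mu> $ z \<le> 1" using prob_vecs_norm[OF m] component_le_norm_cart[of \<mu> z] by linarith
  ultimately show ?thesis by simp
qed

lemma C2_lip:
  fixes S :: "(real ^ 'x::finite) set" and f :: "real ^ 'x \<Rightarrow> real"
  assumes S: "open S" "prob_vecs \<subseteq> S" and C: "C2_on S f"
  shows "\<exists>B. \<forall>\<mu>\<in>prob_vecs. \<forall>\<nu>\<in>prob_vecs. \<bar>f \<nu> - f \<mu>\<bar> \<le> B * norm (\<nu> - \<mu>)"
    and "\<exists>B. \<forall>\<mu>\<in>prob_vecs. \<bar>f \<mu>\<bar> \<le> B"
proof -
  obtain f' f'' where d1: "\<forall>\<mu>\<in>S. (f has_derivative blinfun_apply (f' \<mu>)) (at \<mu>)"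
    and d2: "\<forall>\<mu>\<in>S. (f' has_derivative blinfun_apply (f'' \<mu>)) (at \<mu>)"
    using C unfolding C2_on_def by blast
  have cf': "continuous_on prob_vecs f'"
  proof (rule continuous_at_imp_continuous_on, rule ballI)
    fix \<mu> :: "real ^ 'x" assume "\<mu> \<in> prob_vecs"
    then have "\<mu> \<in> S" using S(2) by (rule subsetD[rotated])
    then have "(f' has_derivative blinfun_apply (f'' \<mu>)) (at \<mu>)" using d2 by (rule bspec[rotated])
    then show "isCont f' \<mu>" by (rule has_derivative_continuous)
  qed
  have cf: "continuous_on prob_vecs f"
  proof (rule continuous_at_imp_continuous_on, rule ballI)
    fix \<mu> :: "real ^ 'x" assume "\<mu> \<in> prob_vecs"
    then have "\<mu> \<in> S" using S(2) by (rule subsetD[rotated])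
    then have "(f has_derivative blinfun_apply (f' \<mu>)) (at \<mu>)" using d1 by (rule bspec[rotated])
    then show "isCont f \<mu>" by (rule has_derivative_continuous)
  qed
  have "bounded (f' ` prob_vecs)"
    by (rule compact_imp_bounded, rule compact_continuous_image[OF cf' prob_vecs_compact])
  then obtain B where B0: "\<forall>x\<in>f' ` prob_vecs. norm x \<le> B" by (meson bounded_iff)
  then have B: "norm (f' \<mu>) \<le> B" if "\<mu> \<in> prob_vecs" for \<mu> using that by simp
  have "bounded (f ` prob_vecs)"
    by (rule compact_imp_bounded, rule compact_continuous_image[OF cf prob_vecs_compact])
  then obtain B2 where B20: "\<forall>x\<in>f ` prob_vecs. norm x \<le> B2" by (meson bounded_iff)
  then have B2: "\<bar>f \<mu>\<bar> \<le> B2" if "\<mu> \<in> prob_vecs" for \<mu> using that by simp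
  show "\<exists>B. \<forall>\<mu>\<in>prob_vecs. \<bar>f \<mu>\<bar> \<le> B" using B2 by (intro exI[of _ B2] ballI)
  show "\<exists>B. \<forall>\<mu>\<in>prob_vecs. \<forall>\<nu>\<in>prob_vecs. \<bar>f \<nu> - f \<mu>\<bar> \<le> B * norm (\<nu> - \<mu>)"
  proof (intro exI[of _ B] ballI)
    fix \<mu> \<nu> :: "real ^ 'x" assume m: "\<mu> \<in> prob_vecs" and n: "\<nu> \<in> prob_vecs"
    have "norm (f \<nu> - f \<mu>) \<le> B * norm (\<nu> - \<mu>)"
    proof (rule differentiable_bound[OF prob_vecs_convex _ _ n m])
      fix x :: "real ^ 'x" assume x: "x \<in> prob_vecs"
      then have "x \<in> S" using S(2) by (rule subsetD[rotated])
      then have "(f has_derivative blinfun_apply (f' x)) (at x)" using d1 by (rule bspec[rotated])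
      then show "(f has_derivative blinfun_apply (f' x)) (at x within prob_vecs)"
        by (rule has_derivative_at_withinI)
    next
      fix x :: "real ^ 'x" assume "x \<in> prob_vecs"
      then have "norm (f' x) \<le> B" by (rule B)
      then show "onorm (blinfun_apply (f' x)) \<le> B" by (simp add: norm_blinfun.rep_eq)
    qed
    then show "\<bar>f \<nu> - f \<mu>\<bar> \<le> B * norm (\<nu> - \<mu>)" by simp
  qed
qed

lemma energy_lip:
  fixes K :: "'x::finite \<Rightarrow> real ^ 'x \<Rightarrow> real"
  assumes "\<exists>S. open S \<and> prob_vecs \<subseteq> S \<and> (\<forall>z. C2_on S (K z))"
  shows "\<exists>CU. \<forall>\<mu>\<in>prob_vecs. \<forall>\<nu>\<in>prob_vecs. \<bar>energy K \<nu> - energy K \<mu>\<bar> \<le> CU * norm (\<nu> - \<mu>)"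
proof -
  obtain S :: "(real ^ 'x) set" where S: "open S" "prob_vecs \<subseteq> S" "\<forall>z. C2_on S (K z)" using assms by blast
  have "\<forall>z. \<exists>B. \<forall>\<mu>\<in>prob_vecs. \<forall>\<nu>\<in>prob_vecs. \<bar>K z \<nu> - K z \<mu>\<bar> \<le> B * norm (\<nu> - \<mu>)"
    using C2_lip(1)[OF S(1,2)] S(3) by blast
  then obtain Bl where Bl: "\<forall>z. \<forall>\<mu>\<in>prob_vecs. \<forall>\<nu>\<in>prob_vecs. \<bar>K z \<nu> - K z \<mu>\<bar> \<le> Bl z * norm (\<nu> - \<mu>)"
    by metis
  have "\<forall>z. \<exists>B. \<forall>\<mu>\<in>(prob_vecs :: (real ^ 'x) set). \<bar>K z \<mu>\<bar> \<le> B"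
    using C2_lip(2)[OF S(1,2)] S(3) by blast
  then obtain Bk where Bk: "\<forall>z. \<forall>\<mu>\<in>(prob_vecs :: (real ^ 'x) set). \<bar>K z \<mu>\<bar> \<le> Bk z"
    by metis
  show ?thesis
  proof (intro exI[of _ "\<Sum>z\<in>UNIV. \<bar>Bk z\<bar> + \<bar>Bl z\<bar>"] ballI)
    fix \<mu> \<nu> :: "real ^ 'x" assume m: "\<mu> \<in> prob_vecs" and n: "\<nu> \<in> prob_vecs"
    let ?n = "norm (\<nu> - \<mu>)"
    have tm: "\<bar>\<nu> $ z * K z \<nu> - \<mu> $ z * K z \<mu>\<bar> \<le> (\<bar>Bk z\<bar> + \<bar>Bl z\<bar>) * ?n" for z
    proof -
      have eq: "\<nu> $ z * K z \<nu> - \<mu> $ z * K z \<mu> = (\<nu> $ z - \<mu> $ z) * K z \<nu> + \<mu> $ z * (K z \<nu> - K z \<mu>)"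
        by (simp add: algebra_simps)
      have c: "\<bar>\<nu> $ z - \<mu> $ z\<bar> \<le> ?n" using component_le_norm_cart[of "\<nu> - \<mu>" z] by simp
      have k0: "\<bar>K z \<nu>\<bar> \<le> Bk z" using Bk n by blast
      have k: "\<bar>K z \<nu>\<bar> \<le> \<bar>Bk z\<bar>" using k0 by linarith
      have m1: "\<bar>\<mu> $ z\<bar> \<le> 1" using prob_vecs_comp[OF m, of z] by simp
      have l: "\<bar>K z \<nu> - K z \<mu>\<bar> \<le> \<bar>Bl z\<bar> * ?n"
      proof -
        have "\<bar>K z \<nu> - K z \<mu>\<bar> \<le> Bl z * ?n" using Bl m n by blast
        also have "\<dots> \<le> \<bar>Bl z\<bar> * ?n" by (intro mult_right_mono) auto
        finally show ?thesis .
      qed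
      have "\<bar>(\<nu> $ z - \<mu> $ z) * K z \<nu>\<bar> \<le> ?n * \<bar>Bk z\<bar>"
        unfolding abs_mult by (intro mult_mono c k) auto
      moreover have "\<bar>\<mu> $ z * (K z \<nu> - K z \<mu>)\<bar> \<le> 1 * (\<bar>Bl z\<bar> * ?n)"
        unfolding abs_mult by (intro mult_mono m1 l) auto
      ultimately show ?thesis unfolding eq
        using abs_triangle_ineq[of "(\<nu> $ z - \<mu> $ z) * K z \<nu>" "\<mu> $ z * (K z \<nu> - K z \<mu>)"]
        by (simp add: algebra_simps)
    qed
    have "\<bar>energy K \<nu> - energy K \<mu>\<bar> = \<bar>\<Sum>z\<in>UNIV. \<nu> $ z * K z \<nu> - \<mu> $ z * K z \<mu>\<bar>"
      unfolding energy_def by (simp add: sum_subtractf)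
    also have "\<dots> \<le> (\<Sum>z\<in>UNIV. \<bar>\<nu> $ z * K z \<nu> - \<mu> $ z * K z \<mu>\<bar>)" by (rule sum_abs)
    also have "\<dots> \<le> (\<Sum>z\<in>UNIV. (\<bar>Bk z\<bar> + \<bar>Bl z\<bar>) * ?n)" by (intro sum_mono tm)
    finally show "\<bar>energy K \<nu> - energy K \<mu>\<bar> \<le> (\<Sum>z\<in>UNIV. \<bar>Bk z\<bar> + \<bar>Bl z\<bar>) * ?n"
      by (simp add: sum_distrib_right)
  qed
qed

lemma uniform_prob: "(\<chi> z. 1 / real CARD('x::finite)) \<in> (prob_vecs :: (real ^ 'x) set)"
  unfolding prob_vecs_def by simp

lemma rate_bound:
  fixes K :: "'x::finite \<Rightarrow> real ^ 'x \<Rightarrow> real"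
    and A :: "real ^ 'x \<Rightarrow> 'x \<Rightarrow> 'x \<Rightarrow> real"
    and AN :: "nat \<Rightarrow> real ^ 'x \<Rightarrow> 'x \<Rightarrow> 'x \<Rightarrow> real"
  assumes K_C2: "\<exists>S. open S \<and> prob_vecs \<subseteq> S \<and> (\<forall>z. C2_on S (K z))"
    and A_lip: "\<exists>C. \<forall>\<mu>\<in>prob_vecs. \<forall>\<nu>\<in>prob_vecs. \<forall>y z. \<bar>A \<mu> y z - A \<nu> y z\<bar> \<le> C * norm (\<mu> - \<nu>)"
    and AN_mat: "\<forall>N. \<forall>\<mu>\<in>prob_vecs. irreducible_matrix (AN N \<mu>) \<and> symmetric_matrix (AN N \<mu>) \<and> nonneg_matrix (AN N \<mu>)"
    and AN_conv: "\<forall>e>0. \<exists>N0. \<forall>N\<ge>N0. \<forall>\<mu>\<in>prob_vecs. \<forall>y z. \<bar>AN N \<mu> y z - A \<mu> y z\<bar> < e"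
  shows "\<exists>\<rho> N0. 0 \<le> \<rho> \<and> 1 \<le> N0 \<and> (\<forall>N\<ge>N0. \<forall>a\<in>configs N. \<forall>i<N. \<forall>y. y \<noteq> a ! i \<longrightarrow>
            0 \<le> rateQ K AN N (emp N a) (a ! i) y \<and> rateQ K AN N (emp N a) (a ! i) y \<le> \<rho>)"
proof -
  obtain CU where CU: "\<forall>\<mu>\<in>prob_vecs. \<forall>\<nu>\<in>prob_vecs. \<bar>energy K \<nu> - energy K \<mu>\<bar> \<le> CU * norm (\<nu> - \<mu>)"
    using energy_lip[OF K_C2] by blast
  obtain C where C: "\<forall>\<mu>\<in>prob_vecs. \<forall>\<nu>\<in>prob_vecs. \<forall>y z. \<bar>A \<mu> y z - A \<nu> y z\<bar> \<le> C * norm (\<mu> - \<nu>)"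
    using A_lip by blast
  obtain N1 where N1: "\<forall>N\<ge>N1. \<forall>\<mu>\<in>prob_vecs. \<forall>y z. \<bar>AN N \<mu> y z - A \<mu> y z\<bar> < 1"
    using AN_conv by (meson zero_less_one)
  define \<mu>0 :: "real ^ 'x" where "\<mu>0 = (\<chi> z. 1 / real CARD('x))"
  have m0: "\<mu>0 \<in> prob_vecs" unfolding \<mu>0_def by (rule uniform_prob)
  define Am where "Am = (\<Sum>y\<in>UNIV. \<Sum>z\<in>UNIV. \<bar>A \<mu>0 y z\<bar>)"
  have Abd: "A \<mu> y z \<le> Am + 2 * \<bar>C\<bar>" if m: "\<mu> \<in> prob_vecs" for \<mu> y z
  proof -
    have a1: "\<bar>A \<mu>0 y z\<bar> \<le> Am"
    proof -
      have "\<bar>A \<mu>0 y z\<bar> \<le> (\<Sum>z\<in>UNIV. \<bar>A \<mu>0 y z\<bar>)" by (rule member_le_sum) auto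
      also have "\<dots> \<le> Am" unfolding Am_def by (rule member_le_sum) (auto intro: sum_nonneg)
      finally show ?thesis .
    qed
    have nm: "norm (\<mu> - \<mu>0) \<le> 2"
      using norm_triangle_ineq4[of \<mu> \<mu>0] prob_vecs_norm[OF m] prob_vecs_norm[OF m0] by linarith
    have "\<bar>A \<mu> y z - A \<mu>0 y z\<bar> \<le> C * norm (\<mu> - \<mu>0)" using C m m0 by blast
    also have "\<dots> \<le> \<bar>C\<bar> * norm (\<mu> - \<mu>0)" by (intro mult_right_mono) auto
    also have "\<dots> \<le> \<bar>C\<bar> * 2" using nm by (intro mult_left_mono) auto
    finally show ?thesis using a1 by linarith
  qed
  define \<rho> where "\<rho> = exp \<bar>CU\<bar> * (Am + 2 * \<bar>C\<bar> + 1)"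
  have Am0: "0 \<le> Am" unfolding Am_def by (intro sum_nonneg) auto
  show ?thesis
  proof (intro exI[of _ \<rho>] exI[of _ "max N1 1"] conjI allI impI ballI)
    show "0 \<le> \<rho>" unfolding \<rho>_def using Am0 by simp
    show "1 \<le> max N1 1" by simp
    fix N and a :: "'x list" and i y assume N: "max N1 1 \<le> N" and a: "a \<in> configs N" and i: "i < N" and y: "y \<noteq> a ! i"
    have len: "length a = N" using a unfolding configs_def by simp
    have N1': "1 \<le> N" using N by simp
    let ?\<mu> = "emp N a" and ?\<nu> = "emp N (a[i := y])"
    have m: "?\<mu> \<in> prob_vecs" by (rule emp_prob[OF N1'])
    have n: "?\<nu> \<in> prob_vecs" by (rule emp_prob[OF N1'])
    have nu: "?\<nu> = ?\<mu> + (axis y 1 - axis (a ! i) 1) /\<^sub>R real N" by (rule emp_upd[OF len i y])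
    have ANnn: "0 \<le> AN N ?\<mu> (a ! i) y" using AN_mat m unfolding nonneg_matrix_def by blast
    have ANle: "AN N ?\<mu> (a ! i) y \<le> Am + 2 * \<bar>C\<bar> + 1"
    proof -
      have "\<bar>AN N ?\<mu> (a ! i) y - A ?\<mu> (a ! i) y\<bar> < 1" using N1 N m by auto
      then show ?thesis using Abd[OF m, of "a ! i" y] by linarith
    qed
    have expo: "- (real N / 2) * (energy K (?\<mu> + (axis y 1 - axis (a ! i) 1) /\<^sub>R real N) - energy K ?\<mu>) \<le> \<bar>CU\<bar>"
    proof -
      have Npos: "0 < real N" using N1' by simp
      have "norm (?\<nu> - ?\<mu>) = norm (axis y 1 - axis (a ! i) 1 :: real ^ 'x) / real N"
        unfolding nu using Npos by (simp add: divide_inverse mult.commute)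
      also have "\<dots> \<le> 2 / real N"
      proof -
        have "norm (axis y 1 - axis (a ! i) 1 :: real ^ 'x) \<le> norm (axis y 1 :: real ^ 'x) + norm (axis (a ! i) 1 :: real ^ 'x)"
          by (rule norm_triangle_ineq4)
        then have "norm (axis y 1 - axis (a ! i) 1 :: real ^ 'x) \<le> 2" by (simp add: norm_axis_1)
        then show ?thesis using Npos by (simp add: divide_right_mono)
      qed
      finally have nn: "norm (?\<nu> - ?\<mu>) \<le> 2 / real N" .
      have "\<bar>energy K ?\<nu> - energy K ?\<mu>\<bar> \<le> CU * norm (?\<nu> - ?\<mu>)" using CU m n by blast
      also have "\<dots> \<le> \<bar>CU\<bar> * norm (?\<nu> - ?\<mu>)" by (intro mult_right_mono) auto
      also have "\<dots> \<le> \<bar>CU\<bar> * (2 / real N)" using nn by (intro mult_left_mono) auto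
      finally have "\<bar>energy K ?\<nu> - energy K ?\<mu>\<bar> \<le> \<bar>CU\<bar> * (2 / real N)" .
      then have "real N / 2 * \<bar>energy K ?\<nu> - energy K ?\<mu>\<bar> \<le> real N / 2 * (\<bar>CU\<bar> * (2 / real N))"
        using Npos by (intro mult_left_mono) auto
      also have "\<dots> = \<bar>CU\<bar>" using Npos by simp
      finally have "real N / 2 * \<bar>energy K ?\<nu> - energy K ?\<mu>\<bar> \<le> \<bar>CU\<bar>" .
      moreover have "- (real N / 2) * (energy K ?\<nu> - energy K ?\<mu>) \<le> real N / 2 * \<bar>energy K ?\<nu> - energy K ?\<mu>\<bar>"
      proof -
        have "- (energy K ?\<nu> - energy K ?\<mu>) \<le> \<bar>energy K ?\<nu> - energy K ?\<mu>\<bar>" by simp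
        then have "real N / 2 * (- (energy K ?\<nu> - energy K ?\<mu>)) \<le> real N / 2 * \<bar>energy K ?\<nu> - energy K ?\<mu>\<bar>"
          using Npos by (intro mult_left_mono) auto
        then show ?thesis by (simp add: algebra_simps)
      qed
      ultimately show ?thesis unfolding nu[symmetric] by linarith
    qed
    have rq: "rateQ K AN N ?\<mu> (a ! i) y = exp (- (real N / 2) * (energy K (?\<mu> + (axis y 1 - axis (a ! i) 1) /\<^sub>R real N) - energy K ?\<mu>)) * AN N ?\<mu> (a ! i) y"
      unfolding rateQ_def ..
    show "0 \<le> rateQ K AN N ?\<mu> (a ! i) y" unfolding rq using ANnn by simp
    show "rateQ K AN N ?\<mu> (a ! i) y \<le> \<rho>" unfolding rq \<rho>_def
      by (intro mult_mono ANle ANnn) (use expo in auto)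
  qed
qed

lemma instance_N:
  fixes K :: "'x::finite \<Rightarrow> real ^ 'x \<Rightarrow> real"
    and AN :: "nat \<Rightarrow> real ^ 'x \<Rightarrow> 'x \<Rightarrow> 'x \<Rightarrow> real"
    and M' :: "'a measure" and X' :: "real \<Rightarrow> 'a \<Rightarrow> 'x list" and x :: 'x
  assumes \<rho>: "0 \<le> \<rho>"
    and rb: "\<forall>a\<in>configs N. \<forall>i<N. \<forall>y. y \<noteq> a ! i \<longrightarrow>
            0 \<le> rateQ K AN N (emp N a) (a ! i) y \<and> rateQ K AN N (emp N a) (a ! i) y \<le> \<rho>"
    and N: "1 \<le> N"
    and mj: "markov_jump_process M' (configs N) (gen_matrix (genL K AN N)) X'"
  shows "mjp_phi (configs N) (gen_matrix (genL K AN N)) (real N * (real CARD('x) * \<rho> + 1)) M' X' (\<lambda>xs. cnt N xs x)"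
proof -
  let ?S = "configs N :: 'x list set" and ?G = "gen_matrix (genL K AN N)"
    and ?L = "real N * (real CARD('x) * \<rho> + 1)"
  have U: "unif ?S ?G ?L"
    unfolding unif_def
  proof (intro conjI allI impI)
    show "finite ?S" by (rule configs_finite)
    show "0 < ?L" using N \<rho> by (simp add: add_nonneg_pos)
    fix a b assume a: "a \<in> ?S"
    {
      assume "b \<in> ?S" "a \<noteq> b"
      show "0 \<le> ?G a b"
      proof (rule gen_offd)
        fix i y assume "i < N" "y \<noteq> a ! i"
        then show "0 \<le> rateQ K AN N (emp N a) (a ! i) y" using rb a by blast
      qed fact
    }
  next
    fix a assume a: "a \<in> ?S"
    show "sum (?G a) ?S = 0" by (rule gen_rows[OF a])
    have "- ?G a a \<le> real N * (real CARD('x) * \<rho>)"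
    proof (rule gen_diag[OF a _ \<rho>])
      fix i y assume "i < N" "y \<noteq> a ! i"
      then show "rateQ K AN N (emp N a) (a ! i) y \<le> \<rho>" using rb a by blast
    qed
    also have "\<dots> \<le> ?L" using N by (simp add: algebra_simps)
    finally show "- ?G a a \<le> ?L" .
  qed
  have MJ: "prob_space M'" "\<forall>t\<ge>0. \<forall>\<omega>\<in>space M'. X' t \<omega> \<in> ?S"
    "\<forall>t\<ge>0. X' t \<in> measurable M' (count_space UNIV)"
    "\<forall>(n::nat) (ts::nat \<Rightarrow> real) (ss::nat \<Rightarrow> 'x list).
        0 \<le> ts 0 \<longrightarrow> (\<forall>k<n. ts k \<le> ts (Suc k)) \<longrightarrow>
        measure M' {\<omega>\<in>space M'. \<forall>k\<le>n. X' (ts k) \<omega> = ss k} =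
        measure M' {\<omega>\<in>space M'. X' (ts 0) \<omega> = ss 0} *
        (\<Prod>k<n. trans_fun ?S ?G (ts (Suc k) - ts k) (ss k) (ss (Suc k)))"
    using mj unfolding markov_jump_process_def by blast+
  have ax: "mjp_axioms ?S ?G M' X'"
    unfolding mjp_axioms_def using MJ by blast
  have st: "mjp_phi_axioms ?S ?G ?L (\<lambda>xs. cnt N xs x)"
    unfolding mjp_phi_axioms_def
  proof (intro allI impI)
    fix a b assume a: "a \<in> ?S" and b: "b \<in> ?S" and P: "unif.Pm ?G ?L a b \<noteq> 0"
    show "\<bar>cnt N b x - cnt N a x\<bar> \<le> 1"
    proof (cases "a = b")
      case False
      then have "?G a b / ?L \<noteq> 0" using P unfolding unif.Pm_def[OF U] by simp
      then have "?G a b \<noteq> 0" by simp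
      then obtain i y where iy: "i < N" "y \<noteq> a ! i" "b = a[i := y]"
        using gen_support[OF _ False] by blast
      have len: "length a = N" using a unfolding configs_def by simp
      show ?thesis unfolding iy(3) cnt_upd[OF len iy(1,2)] by simp
    qed simp
  qed
  show ?thesis unfolding mjp_phi_def mjp_def using U ax st by blast
qed

theorem lemma3p11:
  fixes K :: "'x::finite \<Rightarrow> real ^ 'x \<Rightarrow> real"
    and A :: "real ^ 'x \<Rightarrow> 'x \<Rightarrow> 'x \<Rightarrow> real"
    and AN :: "nat \<Rightarrow> real ^ 'x \<Rightarrow> 'x \<Rightarrow> 'x \<Rightarrow> real"
    and M :: "nat \<Rightarrow> 'a measure"
    and X :: "nat \<Rightarrow> real \<Rightarrow> 'a \<Rightarrow> 'x list"
    and x :: 'x and \<epsilon> T :: real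
  assumes K_C2: "\<exists>S. open S \<and> prob_vecs \<subseteq> S \<and> (\<forall>z. C2_on S (K z))"
    and A_mat: "\<forall>\<mu>\<in>prob_vecs. irreducible_matrix (A \<mu>) \<and> symmetric_matrix (A \<mu>) \<and> nonneg_matrix (A \<mu>)"
    and A_lip: "\<exists>C. \<forall>\<mu>\<in>prob_vecs. \<forall>\<nu>\<in>prob_vecs. \<forall>y z. \<bar>A \<mu> y z - A \<nu> y z\<bar> \<le> C * norm (\<mu> - \<nu>)"
    and AN_mat: "\<forall>N. \<forall>\<mu>\<in>prob_vecs. irreducible_matrix (AN N \<mu>) \<and> symmetric_matrix (AN N \<mu>) \<and> nonneg_matrix (AN N \<mu>)"
    and AN_conv: "\<forall>e>0. \<exists>N0. \<forall>N\<ge>N0. \<forall>\<mu>\<in>prob_vecs. \<forall>y z. \<bar>AN N \<mu> y z - A \<mu> y z\<bar> < e"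
    and proc: "\<forall>N\<ge>1. markov_jump_process (M N) (configs N) (gen_matrix (genL K AN N)) (X N)"
    and eps: "\<epsilon> > 0"
    and T: "T \<ge> 0"
  shows "((\<lambda>\<delta>. limsup (\<lambda>N. ereal (outer_prob (M N)
            {\<omega>\<in>space (M N). \<exists>t\<in>{0..T}. \<exists>s\<in>{0..T}. \<bar>t - s\<bar> \<le> \<delta> \<and>
               \<bar>emp N (X N t \<omega>) $ x - emp N (X N s \<omega>) $ x\<bar> > \<epsilon>})))
         \<longlongrightarrow> 0) (at_right 0)"
proof -
  obtain \<rho> N0 where \<rho>: "0 \<le> \<rho>" and N0: "1 \<le> N0"
    and rb: "\<forall>N\<ge>N0. \<forall>a\<in>configs N. \<forall>i<N. \<forall>y. y \<noteq> a ! i \<longrightarrow>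
            0 \<le> rateQ K AN N (emp N a) (a ! i) y \<and> rateQ K AN N (emp N a) (a ! i) y \<le> \<rho>"
    using rate_bound[OF K_C2 A_lip AN_mat AN_conv] by blast
  define r where "r = real CARD('x) * \<rho> + 1"
  have rpos: "0 < r" unfolding r_def using \<rho> by (simp add: add_nonneg_pos)
  define E where "E N \<delta> = {\<omega>\<in>space (M N). \<exists>t\<in>{0..T}. \<exists>s\<in>{0..T}. \<bar>t - s\<bar> \<le> \<delta> \<and>
               \<bar>emp N (X N t \<omega>) $ x - emp N (X N s \<omega>) $ x\<bar> > \<epsilon>}" for N \<delta>
  define g where "g \<delta> = (16 * T * \<delta> + 96 * \<delta>^2) * r^2 / \<epsilon>^2" for \<delta> :: real
  have key: "outer_prob (M N) (E N \<delta>) \<le> g \<delta>"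
    if \<delta>: "0 < \<delta>" and NN: "N0 \<le> N" and Nr: "1 / (r * (2 * \<delta>)) \<le> real N" for N \<delta>
  proof -
    have N1: "1 \<le> N" using N0 NN by simp
    have Npos: "0 < real N" using N1 by simp
    interpret mjp_phi "configs N" "gen_matrix (genL K AN N)" "real N * r" "M N" "X N" "\<lambda>xs. cnt N xs x"
      unfolding r_def
      by (rule instance_N[OF \<rho> _ N1]) (use rb NN proc N1 in auto)
    have cad: "AE \<omega> in M N. cadlag_step (\<lambda>t. X N t \<omega>)"
      using proc N1 unfolding markov_jump_process_def by blast
    define c where "c = \<epsilon> * real N / 2"
    have cpos: "0 < c" unfolding c_def using eps Npos by simp
    have setE: "E N \<delta> = {\<omega>\<in>space (M N). \<exists>t\<in>{0..T}. \<exists>s\<in>{0..T}. \<bar>t - s\<bar> \<le> \<delta> \<and>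
        2 * c < \<bar>cnt N (X N t \<omega>) x - cnt N (X N s \<omega>) x\<bar>}"
    proof -
      have "(\<epsilon> < \<bar>emp N u $ x - emp N v $ x\<bar>) = (2 * c < \<bar>cnt N u x - cnt N v x\<bar>)" for u v
      proof -
        have eq1: "\<bar>emp N u $ x - emp N v $ x\<bar> = \<bar>cnt N u x - cnt N v x\<bar> / real N"
          unfolding emp_cnt by (simp add: diff_divide_distrib[symmetric])
        have "(\<epsilon> < \<bar>cnt N u x - cnt N v x\<bar> / real N) = (\<epsilon> * real N < \<bar>cnt N u x - cnt N v x\<bar>)"
          by (rule pos_less_divide_eq[OF Npos])
        then show ?thesis unfolding eq1 c_def by simp
      qed
      then show ?thesis unfolding E_def by simp
    qed
    define \<beta> where "\<beta> = 2 * \<delta>"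
    have bpos: "0 < \<beta>" unfolding \<beta>_def using \<delta> by simp
    have "outer_prob (M N) (E N \<delta>) \<le> real (nat \<lceil>T / (2 * \<delta>)\<rceil> + 2) * (((real N * r * (2 * \<delta>))^2 + real N * r * (2 * \<delta>)) / c^2)"
      unfolding setE using main_bound[OF cad \<delta> cpos T] by (simp add: mult.assoc)
    also have "((real N * r * (2 * \<delta>))^2 + real N * r * (2 * \<delta>)) / c^2
        = 4 * (r^2 * \<beta>^2 + r * \<beta> / real N) / \<epsilon>^2"
      unfolding c_def \<beta>_def using Npos eps by (simp add: field_simps power2_eq_square)
    also have "\<dots> \<le> 4 * (r^2 * \<beta>^2 + r^2 * \<beta>^2) / \<epsilon>^2"
    proof -
      have "1 / (r * \<beta>) \<le> real N" using Nr unfolding \<beta>_def .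
      then have "1 \<le> real N * (r * \<beta>)" using rpos bpos by (simp add: field_simps)
      then have "r * \<beta> / real N \<le> r^2 * \<beta>^2" using Npos rpos bpos
        by (simp add: field_simps power2_eq_square)
      then have "4 * (r^2 * \<beta>^2 + r * \<beta> / real N) \<le> 4 * (r^2 * \<beta>^2 + r^2 * \<beta>^2)"
        by (intro mult_left_mono add_left_mono) auto
      then show ?thesis by (rule divide_right_mono) simp
    qed
    finally have b1: "outer_prob (M N) (E N \<delta>) \<le> real (nat \<lceil>T / (2 * \<delta>)\<rceil> + 2) * (4 * (r^2 * \<beta>^2 + r^2 * \<beta>^2) / \<epsilon>^2)"
      using eps by (simp add: mult_left_mono)
    have nb: "real (nat \<lceil>T / (2 * \<delta>)\<rceil> + 2) \<le> T / \<beta> + 3"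
    proof -
      have "real (nat \<lceil>T / (2 * \<delta>)\<rceil>) = of_int \<lceil>T / (2 * \<delta>)\<rceil>" using T \<delta> by simp
      moreover have "of_int \<lceil>T / (2 * \<delta>)\<rceil> < T / (2 * \<delta>) + 1" using ceiling_correct[of "T / (2 * \<delta>)"] by linarith
      ultimately show ?thesis unfolding \<beta>_def by simp
    qed
    have "real (nat \<lceil>T / (2 * \<delta>)\<rceil> + 2) * (4 * (r^2 * \<beta>^2 + r^2 * \<beta>^2) / \<epsilon>^2) \<le> (T / \<beta> + 3) * (4 * (r^2 * \<beta>^2 + r^2 * \<beta>^2) / \<epsilon>^2)"
      by (rule mult_right_mono[OF nb]) (use eps in simp)
    also have "\<dots> = g \<delta>" unfolding g_def \<beta>_def using \<delta> eps by (simp add: field_simps power2_eq_square)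
    finally show ?thesis using b1 by simp
  qed
  have nonneg: "0 \<le> limsup (\<lambda>N. ereal (outer_prob (M N) (E N \<delta>)))" for \<delta>
    by (rule le_Limsup) (auto simp: outer_prob_nonneg)
  have upper: "limsup (\<lambda>N. ereal (outer_prob (M N) (E N \<delta>))) \<le> ereal (g \<delta>)" if \<delta>: "0 < \<delta>" for \<delta>
  proof (rule Limsup_bounded)
    obtain N2 :: nat where N2: "1 / (r * (2 * \<delta>)) \<le> real N2" using real_arch_simple by blast
    show "\<forall>\<^sub>F N in sequentially. ereal (outer_prob (M N) (E N \<delta>)) \<le> ereal (g \<delta>)"
    proof (rule eventually_sequentiallyI[of "max N0 N2"])
      fix N assume "max N0 N2 \<le> N"
      then have "N0 \<le> N" "real N2 \<le> real N" by auto
      then show "ereal (outer_prob (M N) (E N \<delta>)) \<le> ereal (g \<delta>)"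
        using key[OF \<delta>, of N] N2 by simp
    qed
  qed
  have glim: "((\<lambda>\<delta>. ereal (g \<delta>)) \<longlongrightarrow> 0) (at_right 0)"
  proof -
    have "(g \<longlongrightarrow> (16 * T * 0 + 96 * 0^2) * r^2 / \<epsilon>^2) (at_right 0)"
      unfolding g_def using eps by (intro tendsto_intros) auto
    then have "(g \<longlongrightarrow> 0) (at_right 0)" by simp
    then show ?thesis using tendsto_ereal[of g 0] by (simp add: zero_ereal_def)
  qed
  have "((\<lambda>\<delta>. limsup (\<lambda>N. ereal (outer_prob (M N) (E N \<delta>)))) \<longlongrightarrow> 0) (at_right 0)"
  proof (rule tendsto_sandwich[OF _ _ tendsto_const glim])
    show "\<forall>\<^sub>F \<delta> in at_right 0. 0 \<le> limsup (\<lambda>N. ereal (outer_prob (M N) (E N \<delta>)))"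
      using nonneg by simp
    show "\<forall>\<^sub>F \<delta> in at_right 0. limsup (\<lambda>N. ereal (outer_prob (M N) (E N \<delta>))) \<le> ereal (g \<delta>)"
      by (rule eventually_at_rightI[of 0 1]) (auto intro: upper)
  qed
  then show ?thesis unfolding E_def .
qed


end
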